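(* Let $C_1,C_2$ be compatible counting-star formulas and let $E\wedge H$ be a derivation result of $S_{\{1\}}(C_1)*S_{\{2\}}(C_2)$. Then $E\wedge H\Rightarrow S_{\{1\}}(C_1)*S_{\{2\}}(C_2)$ is valid (true in every $L'$-environment).
   Context: BASE. Fix a finite vocabulary $L=\mathcal A\cup\mathcal F$ ($\mathcal A$ unary, $\mathcal F$ binary predicate symbols); equality is a logical symbol not in $\mathcal F$, always interpreted as identity. Formulas: first-order logic with equality, counting quantifiers $\exists^{\ge k}x.G$, $\exists^{=k}x.G$, and spatial conjunction $*$. An environment has a finite nonempty domain $D$, interpretations of the predicate symbols, and an assignment to variables. $\mathrm{split}\,e\,[e_1,\dots,e_r]$ (same domain, same variable assignment) holds iff for each predicate symbol $P$, $e(P)$ is the disjoint union of the $e_i(P)$; $[\![G_1*G_2]\!]e$ holds iff some $e_1,e_2$ with $\mathrm{split}\,e\,[e_1,e_2]$ satisfy $[\![G_1]\!]e_1$, $[\![G_2]\!]e_2$. $G\sim H$ means equal truth values in all environments. NORMAL FORMS. Atoms over distinct variables $u_1,\dots,u_p$ are $A(u_i)$, $f(u_i,u_j)$, $u_i=u_j$; a GCCAT formula over them contains for each such atom exactly one of the atom or its negation (nothing else), with $u_i=u_j$ positive iff $i=j$. Fix distinct $x_1,\dots,x_n$ and $x$. $\mathrm{ext}(x_1,\dots,x_n;x)$ is the set of conjunctions containing, for each atom over $x,x_1,\dots,x_n$ containing $x$, exactly one of the atom or its negation, with $x=x$ positive and $x=x_i$, $x_i=x$ negated. For $p\ge1$,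 $C_p=\{0,\dots,p-1,p^+\}$; $\exists^{c}x.G$ means $\exists^{=c}x.G$ for integer $c$ and $\exists^{\ge p}x.G$ for $c=p^+$. A counting-star formula is $C=E\wedge F\wedge\bigwedge_{i=1}^{k}\exists^{s_i}x.F'_i$ with $E=\bigwedge_{j=1}^m y_j=x_{i_j}$ ($y_j$ distinct variables not among $x,x_1,\dots,x_n$), $F$ GCCAT over $x_1,\dots,x_n$, $F'_1,\dots,F'_k$ an enumeration of $\mathrm{ext}(x_1,\dots,x_n;x)$, $s_i\in C_q$ for some $q\ge2$. Two counting-star formulas are compatible if they have the same equality part $E$ and GCCAT parts $F_1,F_2$ over the same $x_1,\dots,x_n$. OPERATIONS. $\mathrm{Pos}(T)$ is the set of non-equality positive literals of a conjunction $T$. For $T_1,T_2\in\mathrm{ext}(x_1,\dots,x_n;x)$, $T_1\oplus T_2$ is defined iff $\mathrm{Pos}(T_1)\cap\mathrm{Pos}(T_2)=\emptyset$ and is the unique $T\in\mathrm{ext}$ with $\mathrm{Pos}(T)=\mathrm{Pos}(T_1)\cup\mathrm{Pos}(T_2)$; for GCCAT $F_1,F_2$ over $x_1,\dots,x_n$, $F_1\otimes F_2$ is defined iff $\mathrm{Pos}(F_1)\cap\mathrm{Pos}(F_2)=\emptyset$ and is the unique GCCAT $F$ over $x_1,\dots,x_n$ with $\mathrm{Pos}(F)=\mathrm{Pos}(F_1)\cup\mathrm{Pos}(F_2)$. TRANSLATION. $L'=L\cup\{B_1,B_2\}$ (new unary symbols, split by $*$ like all others). $\mathrm{Mark}_\emptyset(x)=\neg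 B_1(x)\wedge\neg B_2(x)$, $\mathrm{Mark}_{\{1\}}(x)=B_1(x)\wedge\neg B_2(x)$, $\mathrm{Mark}_{\{2\}}(x)=\neg B_1(x)\wedge B_2(x)$, $\mathrm{Mark}_{\{1,2\}}(x)=B_1(x)\wedge B_2(x)$. $\mathcal E_0$: GCCAT over $x_1,\dots,x_n$ whose only positive literals are $x_i=x_i$; $\varnothing_x$: element of $\mathrm{ext}$ whose only positive literal is $x=x$; $\delta(x):=\bigwedge_i x\ne x_i$. $G_E:=\mathcal E_0\wedge\forall x.(\delta(x)\to\varnothing_x\wedge\mathrm{Mark}_\emptyset(x))$; $K(F):=F\wedge\forall x.(\delta(x)\to\varnothing_x\wedge\mathrm{Mark}_\emptyset(x))$; $\mathrm{Any}_m(T):=\mathcal E_0\wedge\forall x.(\delta(x)\to(T\wedge\mathrm{Mark}_m(x))\vee(\varnothing_x\wedge\mathrm{Mark}_\emptyset(x)))$; $\mathrm{One}_m(T):=\mathrm{Any}_m(T)\wedge\exists^{=1}x.(\delta(x)\wedge T\wedge\mathrm{Mark}_m(x))$. $X_m(\exists^{0}x.T):=G_E$, $X_m(\exists^{i+1}x.T):=\mathrm{One}_m(T)*X_m(\exists^{i}x.T)$, $X_m(\exists^{p^+}x.T):=X_m(\exists^{p}x.T)*\mathrm{Any}_m(T)$. $S_m(C):=E\wedge\big(K(F)*X_m(\exists^{s_1}x.F'_1)*\dots*X_m(\exists^{s_k}x.F'_k)\big)$. RULES (when $T_1\oplus T_2$ is defined): (1) $\mathrm{One}_{\{1\}}(T_1)*\mathrm{One}_{\{2\}}(T_2)\to\mathrm{One}_{\{1,2\}}(T_1\oplus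 T_2)$; (2) $\mathrm{One}_{\{1\}}(T_1)*\mathrm{Any}_{\{2\}}(T_2)\to\mathrm{One}_{\{1,2\}}(T_1\oplus T_2)*\mathrm{Any}_{\{2\}}(T_2)$; (3) $\mathrm{Any}_{\{1\}}(T_1)*\mathrm{One}_{\{2\}}(T_2)\to\mathrm{Any}_{\{1\}}(T_1)*\mathrm{One}_{\{1,2\}}(T_1\oplus T_2)$; (4) $\mathrm{Any}_{\{1\}}(T_1)*\mathrm{Any}_{\{2\}}(T_2)\to\mathrm{Any}_{\{1\}}(T_1)*\mathrm{Any}_{\{2\}}(T_2)*\mathrm{Any}_{\{1,2\}}(T_1\oplus T_2)$; (5) $\mathrm{Any}_{\{1\}}(T)\to G_E$; (6) $\mathrm{Any}_{\{2\}}(T)\to G_E$. DERIVATION. For compatible $C_1=E\wedge F_1\wedge\dots$, $C_2=E\wedge F_2\wedge\dots$, write $S_{\{1\}}(C_1)*S_{\{2\}}(C_2)$ as $E\wedge W$ where $W$ is the spatial conjunction of $K(F_1)$, $K(F_2)$ and all the (unfolded) $\mathrm{One}_m$, $\mathrm{Any}_m$, $G_E$ conjuncts of the $X_{\{1\}}$ and $X_{\{2\}}$ parts. $E\wedge H$ is a derivation result if $H$ is obtained from $W$ by: first replacing $K(F_1)*K(F_2)$ by $K(F_1\otimes F_2)$ if defined, and by $\mathit{false}$ otherwise; then applying finitely many rule instances of (1)–(6), each replacing a spatial sub-conjunction matching a rule's left side by its right side, working modulo associativity and commutativity of $*$, the unit law $G*G_E\sim G$ and idempotence $\mathrm{Any}_m(T)*\mathrm{Any}_m(T)\sim\mathrm{Any}_m(T)$,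 with all applications of (1)–(4) preceding those of (5)–(6); and such that in the end, apart from the $K$-conjunct, $H$ contains only conjuncts of the forms $\mathrm{One}_{\{1,2\}}(T)$ and $\mathrm{Any}_{\{1,2\}}(T)$. *)

theory Defs
  imports Main "HOL-Library.Multiset"
begin

text \<open>Variables are natural numbers. The original vocabulary L has unary symbols of
  type 'u and binary symbols of type 'b (both finite types in the theorem).
  L' adds the two new unary symbols B1, B2.\<close>

datatype 'u usym = Orig 'u | B1 | B2

datatype ('u,'b) form =
    FTrue | FFalse
  | UAt "'u usym" nat
  | BAt 'b nat nat
  | Eq nat nat
  | Neg "('u,'b) form"
  | Conj "('u,'b) form" "('u,'b) form"
  | Disj "('u,'b) form" "('u,'b) form"
  | Imp "('u,'b) form" "('u,'b) form"
  | All nat "('u,'b) form"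
  | Ex nat "('u,'b) form"
  | ExGe nat nat "('u,'b) form"
  | ExEq nat nat "('u,'b) form"
  | Star "('u,'b) form" "('u,'b) form"

record ('d,'u,'b) env =
  edom :: "'d set"
  eU   :: "'u usym \<Rightarrow> 'd set"
  eB   :: "'b \<Rightarrow> ('d \<times> 'd) set"
  easg :: "nat \<Rightarrow> 'd"

definition wf_env :: "('d,'u,'b) env \<Rightarrow> bool" where
  "wf_env e \<longleftrightarrow> finite (edom e) \<and> edom e \<noteq> {} \<and>
     (\<forall>P. eU e P \<subseteq> edom e) \<and> (\<forall>f. eB e f \<subseteq> edom e \<times> edom e) \<and>
     (\<forall>v. easg e v \<in> edom e)"

definition split2 :: "('d,'u,'b) env \<Rightarrow> ('d,'u,'b) env \<Rightarrow> ('d,'u,'b) env \<Rightarrow> bool" where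
  "split2 e e1 e2 \<longleftrightarrow>
     edom e1 = edom e \<and> edom e2 = edom e \<and> easg e1 = easg e \<and> easg e2 = easg e \<and>
     (\<forall>P. eU e P = eU e1 P \<union> eU e2 P \<and> eU e1 P \<inter> eU e2 P = {}) \<and>
     (\<forall>f. eB e f = eB e1 f \<union> eB e2 f \<and> eB e1 f \<inter> eB e2 f = {})"

definition upd :: "('d,'u,'b) env \<Rightarrow> nat \<Rightarrow> 'd \<Rightarrow> ('d,'u,'b) env" where
  "upd e v d = e\<lparr>easg := (easg e)(v := d)\<rparr>"

primrec sat :: "('u,'b) form \<Rightarrow> ('d,'u,'b) env \<Rightarrow> bool" where
  "sat FTrue e = True"
| "sat FFalse e = False"
| "sat (UAt P v) e = (easg e v \<in> eU e P)"
| "sat (BAt f u v) e = ((easg e u, easg e v) \<in> eB e f)"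
| "sat (Eq u v) e = (easg e u = easg e v)"
| "sat (Neg G) e = (\<not> sat G e)"
| "sat (Conj G H) e = (sat G e \<and> sat H e)"
| "sat (Disj G H) e = (sat G e \<or> sat H e)"
| "sat (Imp G H) e = (sat G e \<longrightarrow> sat H e)"
| "sat (All v G) e = (\<forall>d\<in>edom e. sat G (upd e v d))"
| "sat (Ex v G) e = (\<exists>d\<in>edom e. sat G (upd e v d))"
| "sat (ExGe k v G) e = (k \<le> card {d\<in>edom e. sat G (upd e v d)})"
| "sat (ExEq k v G) e = (card {d\<in>edom e. sat G (upd e v d)} = k)"
| "sat (Star G H) e = (\<exists>e1 e2. split2 e e1 e2 \<and> sat G e1 \<and> sat H e2)"

fun conj_list :: "('u,'b) form list \<Rightarrow> ('u,'b) form" where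
  "conj_list [] = FTrue"
| "conj_list [G] = G"
| "conj_list (G # Gs) = Conj G (conj_list Gs)"

fun star_list :: "('u,'b) form list \<Rightarrow> ('u,'b) form" where
  "star_list [] = FTrue"
| "star_list [G] = G"
| "star_list (G # Gs) = Star G (star_list Gs)"

text \<open>Atoms/literals over the ORIGINAL vocabulary L.\<close>
datatype ('u,'b) atom = AU 'u nat | AB 'b nat nat | AE nat nat
datatype ('u,'b) lit = PosL "('u,'b) atom" | NegL "('u,'b) atom"

fun atom_vars :: "('u,'b) atom \<Rightarrow> nat set" where
  "atom_vars (AU A u) = {u}"
| "atom_vars (AB f u v) = {u, v}"
| "atom_vars (AE u v) = {u, v}"

fun is_eq_atom :: "('u,'b) atom \<Rightarrow> bool" where
  "is_eq_atom (AE u v) = True"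
| "is_eq_atom _ = False"

fun lit_atom :: "('u,'b) lit \<Rightarrow> ('u,'b) atom" where
  "lit_atom (PosL a) = a"
| "lit_atom (NegL a) = a"

definition atoms_over :: "nat set \<Rightarrow> ('u,'b) atom set" where
  "atoms_over V = {AU A u | A u. u \<in> V} \<union> {AB f u v | f u v. u \<in> V \<and> v \<in> V}
                  \<union> {AE u v | u v. u \<in> V \<and> v \<in> V}"

definition complete_over :: "('u,'b) atom set \<Rightarrow> ('u,'b) lit set \<Rightarrow> bool" where
  "complete_over A S \<longleftrightarrow> (\<forall>l\<in>S. lit_atom l \<in> A) \<and>
     (\<forall>a\<in>A. (PosL a \<in> S) \<noteq> (NegL a \<in> S)) \<and>
     (\<forall>u v. AE u v \<in> A \<longrightarrow> (PosL (AE u v) \<in> S \<longleftrightarrow> u = v))"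

definition is_gccat :: "nat list \<Rightarrow> ('u,'b) lit set \<Rightarrow> bool" where
  "is_gccat xs S \<longleftrightarrow> complete_over (atoms_over (set xs)) S"

definition ext :: "nat list \<Rightarrow> nat \<Rightarrow> ('u,'b) lit set set" where
  "ext xs x = {S. complete_over {a \<in> atoms_over (insert x (set xs)). x \<in> atom_vars a} S}"

definition posset :: "('u,'b) lit set \<Rightarrow> ('u,'b) atom set" where
  "posset S = {a. PosL a \<in> S \<and> \<not> is_eq_atom a}"

definition oplus :: "nat list \<Rightarrow> nat \<Rightarrow> ('u,'b) lit set \<Rightarrow> ('u,'b) lit set \<Rightarrow> ('u,'b) lit set" where
  "oplus xs x T1 T2 = (THE T. T \<in> ext xs x \<and> posset T = posset T1 \<union> posset T2)"

definition otimes :: "nat list \<Rightarrow> ('u,'b) lit set \<Rightarrow> ('u,'b) lit set \<Rightarrow> ('u,'b) lit set" where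
  "otimes xs F1 F2 = (THE F. is_gccat xs F \<and> posset F = posset F1 \<union> posset F2)"

fun atom_form :: "('u,'b) atom \<Rightarrow> ('u,'b) form" where
  "atom_form (AU A u) = UAt (Orig A) u"
| "atom_form (AB f u v) = BAt f u v"
| "atom_form (AE u v) = Eq u v"

fun lit_form :: "('u,'b) lit \<Rightarrow> ('u,'b) form" where
  "lit_form (PosL a) = atom_form a"
| "lit_form (NegL a) = Neg (atom_form a)"

definition conj_set :: "('u,'b) lit set \<Rightarrow> ('u,'b) form" where
  "conj_set S = conj_list (map lit_form (SOME ls. set ls = S \<and> distinct ls))"

datatype cnt = Exactly nat | AtLeast nat   \<comment> \<open>c in C_p: an integer c, or p^+\<close>

definition Cset :: "nat \<Rightarrow> cnt set" where
  "Cset q = {Exactly i | i. i < q} \<union> {AtLeast q}"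

text \<open>A counting-star formula E /\ F /\ AND_i exists^{s_i} x. F'_i : equality part as list of
  pairs (y_j, x_{i_j}), the GCCAT part F, and the list of pairs (F'_i, s_i).\<close>
record ('u,'b) cstar =
  ceq    :: "(nat \<times> nat) list"
  cF     :: "('u,'b) lit set"
  cparts :: "(('u,'b) lit set \<times> cnt) list"

definition is_cstar :: "nat list \<Rightarrow> nat \<Rightarrow> ('u,'b) cstar \<Rightarrow> bool" where
  "is_cstar xs x C \<longleftrightarrow>
     distinct (map fst (ceq C)) \<and>
     (\<forall>(y,z)\<in>set (ceq C). y \<notin> set (x # xs) \<and> z \<in> set xs) \<and>
     is_gccat xs (cF C) \<and>
     distinct (map fst (cparts C)) \<and> set (map fst (cparts C)) = ext xs x \<and>
     (\<exists>q\<ge>2. \<forall>(T,s)\<in>set (cparts C). s \<in> Cset q)"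

definition compatible :: "('u,'b) cstar \<Rightarrow> ('u,'b) cstar \<Rightarrow> bool" where
  "compatible C1 C2 \<longleftrightarrow> ceq C1 = ceq C2"

definition eq_form :: "(nat \<times> nat) list \<Rightarrow> ('u,'b) form" where
  "eq_form E = conj_list (map (\<lambda>(y,z). Eq y z) E)"

definition mark :: "nat set \<Rightarrow> nat \<Rightarrow> ('u,'b) form" where
  "mark m v = Conj (if 1 \<in> m then UAt B1 v else Neg (UAt B1 v))
                   (if 2 \<in> m then UAt B2 v else Neg (UAt B2 v))"

definition E0 :: "nat list \<Rightarrow> ('u,'b) form" where
  "E0 xs = conj_set (THE F. is_gccat xs F \<and> posset F = {})"

definition empx :: "nat list \<Rightarrow> nat \<Rightarrow> ('u,'b) form" where
  "empx xs x = conj_set (THE T. T \<in> ext xs x \<and> posset T = {})"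

definition delta :: "nat list \<Rightarrow> nat \<Rightarrow> ('u,'b) form" where
  "delta xs x = conj_list (map (\<lambda>xi. Neg (Eq x xi)) xs)"

definition GE :: "nat list \<Rightarrow> nat \<Rightarrow> ('u,'b) form" where
  "GE xs x = Conj (E0 xs) (All x (Imp (delta xs x) (Conj (empx xs x) (mark {} x))))"

definition KF :: "nat list \<Rightarrow> nat \<Rightarrow> ('u,'b) lit set \<Rightarrow> ('u,'b) form" where
  "KF xs x F = Conj (conj_set F) (All x (Imp (delta xs x) (Conj (empx xs x) (mark {} x))))"

definition AnyF :: "nat list \<Rightarrow> nat \<Rightarrow> nat set \<Rightarrow> ('u,'b) lit set \<Rightarrow> ('u,'b) form" where
  "AnyF xs x m T = Conj (E0 xs) (All x (Imp (delta xs x)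
      (Disj (Conj (conj_set T) (mark m x)) (Conj (empx xs x) (mark {} x)))))"

definition OneF :: "nat list \<Rightarrow> nat \<Rightarrow> nat set \<Rightarrow> ('u,'b) lit set \<Rightarrow> ('u,'b) form" where
  "OneF xs x m T = Conj (AnyF xs x m T)
      (ExEq 1 x (Conj (delta xs x) (Conj (conj_set T) (mark m x))))"

primrec Xeq :: "nat list \<Rightarrow> nat \<Rightarrow> nat set \<Rightarrow> ('u,'b) lit set \<Rightarrow> nat \<Rightarrow> ('u,'b) form" where
  "Xeq xs x m T 0 = GE xs x"
| "Xeq xs x m T (Suc i) = Star (OneF xs x m T) (Xeq xs x m T i)"

fun Xf :: "nat list \<Rightarrow> nat \<Rightarrow> nat set \<Rightarrow> ('u,'b) lit set \<Rightarrow> cnt \<Rightarrow> ('u,'b) form" where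
  "Xf xs x m T (Exactly i) = Xeq xs x m T i"
| "Xf xs x m T (AtLeast p) = Star (Xeq xs x m T p) (AnyF xs x m T)"

definition Sf :: "nat list \<Rightarrow> nat \<Rightarrow> nat set \<Rightarrow> ('u,'b) cstar \<Rightarrow> ('u,'b) form" where
  "Sf xs x m C = Conj (eq_form (ceq C))
      (foldl Star (KF xs x (cF C)) (map (\<lambda>(T,s). Xf xs x m T s) (cparts C)))"

section \<open>Derivations (spatial conjunctions modulo AC as multisets of conjuncts)\<close>

datatype ('u,'b) sconj = SK "('u,'b) lit set" | SFalse | SGE
  | SOne "nat set" "('u,'b) lit set" | SAny "nat set" "('u,'b) lit set"

fun sform :: "nat list \<Rightarrow> nat \<Rightarrow> ('u,'b) sconj \<Rightarrow> ('u,'b) form" where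
  "sform xs x (SK F) = KF xs x F"
| "sform xs x SFalse = FFalse"
| "sform xs x SGE = GE xs x"
| "sform xs x (SOne m T) = OneF xs x m T"
| "sform xs x (SAny m T) = AnyF xs x m T"

fun xconj :: "nat set \<Rightarrow> ('u,'b) lit set \<times> cnt \<Rightarrow> ('u,'b) sconj multiset" where
  "xconj m (T, Exactly i) = replicate_mset i (SOne m T) + {#SGE#}"
| "xconj m (T, AtLeast p) = replicate_mset p (SOne m T) + {#SGE#} + {#SAny m T#}"

text \<open>Initial state after replacing K(F1)*K(F2) by K(F1 otimes F2) or false.\<close>
definition init_state :: "nat list \<Rightarrow> ('u,'b) cstar \<Rightarrow> ('u,'b) cstar \<Rightarrow> ('u,'b) sconj multiset" where
  "init_state xs C1 C2 =
     {# (if posset (cF C1) \<inter> posset (cF C2) = {} then SK (otimes xs (cF C1) (cF C2)) else SFalse) #}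
     + sum_list (map (xconj {1}) (cparts C1)) + sum_list (map (xconj {2}) (cparts C2))"

text \<open>Rewriting modulo the unit law G * G_E ~ G and idempotence of Any (both directions).\<close>
definition eqstep :: "('u,'b) sconj multiset \<Rightarrow> ('u,'b) sconj multiset \<Rightarrow> bool" where
  "eqstep M M' \<longleftrightarrow>
     (M \<noteq> {#} \<and> M' = add_mset SGE M) \<or> (M' \<noteq> {#} \<and> M = add_mset SGE M') \<or>
     (\<exists>N m T. M = N + {#SAny m T, SAny m T#} \<and> M' = N + {#SAny m T#}) \<or>
     (\<exists>N m T. M' = N + {#SAny m T, SAny m T#} \<and> M = N + {#SAny m T#})"

definition rule14 :: "nat list \<Rightarrow> nat \<Rightarrow> ('u,'b) sconj multiset \<Rightarrow> ('u,'b) sconj multiset \<Rightarrow> bool" where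
  "rule14 xs x M M' \<longleftrightarrow> (\<exists>N T1 T2. posset T1 \<inter> posset T2 = {} \<and>
     ((M = N + {#SOne {1} T1, SOne {2} T2#} \<and> M' = N + {#SOne {1,2} (oplus xs x T1 T2)#}) \<or>
      (M = N + {#SOne {1} T1, SAny {2} T2#} \<and>
         M' = N + {#SOne {1,2} (oplus xs x T1 T2), SAny {2} T2#}) \<or>
      (M = N + {#SAny {1} T1, SOne {2} T2#} \<and>
         M' = N + {#SAny {1} T1, SOne {1,2} (oplus xs x T1 T2)#}) \<or>
      (M = N + {#SAny {1} T1, SAny {2} T2#} \<and>
         M' = N + {#SAny {1} T1, SAny {2} T2, SAny {1,2} (oplus xs x T1 T2)#})))"

definition rule56 :: "('u,'b) sconj multiset \<Rightarrow> ('u,'b) sconj multiset \<Rightarrow> bool" where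
  "rule56 M M' \<longleftrightarrow> (\<exists>N T. (M = N + {#SAny {1} T#} \<or> M = N + {#SAny {2} T#}) \<and> M' = N + {#SGE#})"

definition phase1 :: "nat list \<Rightarrow> nat \<Rightarrow> ('u,'b) sconj multiset \<Rightarrow> ('u,'b) sconj multiset \<Rightarrow> bool" where
  "phase1 xs x M M' \<longleftrightarrow> eqstep M M' \<or> rule14 xs x M M'"

definition phase2 :: "('u,'b) sconj multiset \<Rightarrow> ('u,'b) sconj multiset \<Rightarrow> bool" where
  "phase2 M M' \<longleftrightarrow> eqstep M M' \<or> rule56 M M'"

fun is_Kslot :: "('u,'b) sconj \<Rightarrow> bool" where
  "is_Kslot (SK F) = True"
| "is_Kslot SFalse = True"
| "is_Kslot _ = False"

fun is_final12 :: "('u,'b) sconj \<Rightarrow> bool" where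
  "is_final12 (SOne m T) = (m = {1,2})"
| "is_final12 (SAny m T) = (m = {1,2})"
| "is_final12 _ = False"

definition final_state :: "('u,'b) sconj multiset \<Rightarrow> bool" where
  "final_state M \<longleftrightarrow> (\<exists>k R. M = add_mset k R \<and> is_Kslot k \<and> (\<forall>d\<in>#R. is_final12 d))"

definition derivation_result ::
  "nat list \<Rightarrow> nat \<Rightarrow> ('u,'b) cstar \<Rightarrow> ('u,'b) cstar \<Rightarrow> ('u,'b) form \<Rightarrow> bool" where
  "derivation_result xs x C1 C2 H \<longleftrightarrow>
     (\<exists>M1 M2 l. (phase1 xs x)\<^sup>*\<^sup>* (init_state xs C1 C2) M1 \<and> phase2\<^sup>*\<^sup>* M1 M2 \<and>
        final_state M2 \<and> mset l = M2 \<and> H = star_list (map (sform xs x) l))"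

end

theory Submission
  imports Defs
begin



definition emptyof :: "('d,'u,'b) env \<Rightarrow> ('d,'u,'b) env" where
  "emptyof e = e\<lparr>eU := (\<lambda>_. {}), eB := (\<lambda>_. {})\<rparr>"

definition emp :: "('d,'u,'b) env \<Rightarrow> bool" where
  "emp e \<longleftrightarrow> (\<forall>P. eU e P = {}) \<and> (\<forall>f. eB e f = {})"

lemma split_comm: "split2 e e1 e2 \<Longrightarrow> split2 e e2 e1"
  by (auto simp: split2_def)

lemma split_emptyof: "split2 e e (emptyof e)" "emp (emptyof e)"
  by (auto simp: split2_def emptyof_def emp_def)

lemma split_emp: "split2 e e1 e2 \<Longrightarrow> emp e2 \<Longrightarrow> e1 = e"
  by (rule env.equality) (auto simp: split2_def emp_def)

lemma split_assoc:
  assumes "split2 e e1 e23" "split2 e23 e2 e3"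
  shows "\<exists>e12. split2 e e12 e3 \<and> split2 e12 e1 e2"
proof -
  let ?e12 = "e1\<lparr>eU := \<lambda>P. eU e1 P \<union> eU e2 P, eB := \<lambda>f. eB e1 f \<union> eB e2 f\<rparr>"
  have "split2 e ?e12 e3 \<and> split2 ?e12 e1 e2"
    using assms unfolding split2_def by (auto; blast)
  then show ?thesis by blast
qed

lemma split_assoc':
  assumes "split2 e e12 e3" "split2 e12 e1 e2"
  shows "\<exists>e23. split2 e e1 e23 \<and> split2 e23 e2 e3"
proof -
  from split_assoc[OF split_comm[OF assms(1)] split_comm[OF assms(2)]]
  obtain e32 where "split2 e e32 e1" "split2 e32 e3 e2" by blast
  then show ?thesis using split_comm by blast
qed

fun semL :: "('u,'b) form list \<Rightarrow> ('d,'u,'b) env \<Rightarrow> bool" where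
  "semL [] e = emp e"
| "semL (G # Gs) e = (\<exists>e1 e2. split2 e e1 e2 \<and> sat G e1 \<and> semL Gs e2)"

lemma semL_app:
  "semL (l1 @ l2) e \<longleftrightarrow> (\<exists>e1 e2. split2 e e1 e2 \<and> semL l1 e1 \<and> semL l2 e2)"
proof (induction l1 arbitrary: e)
  case Nil
  show ?case
  proof
    assume "semL ([] @ l2) e"
    then show "\<exists>e1 e2. split2 e e1 e2 \<and> semL [] e1 \<and> semL l2 e2"
      using split_emptyof[of e] split_comm by fastforce
  next
    assume "\<exists>e1 e2. split2 e e1 e2 \<and> semL [] e1 \<and> semL l2 e2"
    then obtain e1 e2 where "split2 e e1 e2" "emp e1" "semL l2 e2" by auto
    then have "e2 = e" using split_emp split_comm by blast
    then show "semL ([] @ l2) e" using \<open>semL l2 e2\<close> by simp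
  qed
next
  case (Cons G l1)
  show ?case
  proof
    assume "semL ((G # l1) @ l2) e"
    then obtain ea eb where a: "split2 e ea eb" "sat G ea" "semL (l1 @ l2) eb" by auto
    then obtain eb1 eb2 where b: "split2 eb eb1 eb2" "semL l1 eb1" "semL l2 eb2"
      using Cons.IH by blast
    obtain e12 where "split2 e e12 eb2" "split2 e12 ea eb1" using split_assoc[OF a(1) b(1)] by blast
    then show "\<exists>e1 e2. split2 e e1 e2 \<and> semL (G # l1) e1 \<and> semL l2 e2"
      using a b by auto
  next
    assume "\<exists>e1 e2. split2 e e1 e2 \<and> semL (G # l1) e1 \<and> semL l2 e2"
    then obtain e1 e2 e11 e12 where c: "split2 e e1 e2" "split2 e1 e11 e12" "sat G e11"
      "semL l1 e12" "semL l2 e2" by auto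
    obtain e23 where d: "split2 e e11 e23" "split2 e23 e12 e2" using split_assoc'[OF c(1) c(2)] by blast
    have "semL (l1 @ l2) e23" using Cons.IH d(2) c by blast
    then show "semL ((G # l1) @ l2) e" using d c by auto
  qed
qed

lemma semL_swap: "semL (l1 @ l2) e = semL (l2 @ l1) e"
  unfolding semL_app using split_comm by blast

lemma semL_perm: "mset l = mset l' \<Longrightarrow> semL l e = semL l' e"
proof (induction l arbitrary: l' e)
  case Nil
  then show ?case by simp
next
  case (Cons a l0)
  then have "a \<in> set l'" by (metis list.set_intros(1) set_mset_mset)
  then obtain p s where l': "l' = p @ a # s" by (meson split_list)
  have m: "mset l0 = mset (s @ p)" using Cons.prems l' by simp
  have "semL l' e = semL (a # (s @ p)) e" using semL_swap[of p "a # s" e] l' by simp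
  also have "\<dots> = semL (a # l0) e" using Cons.IH[OF m] by simp
  finally show ?case by simp
qed

lemma semL_star_list: "l \<noteq> [] \<Longrightarrow> sat (star_list l) e = semL l e"
proof (induction l arbitrary: e rule: star_list.induct)
  case 1 then show ?case by simp
next
  case (2 G)
  show ?case
  proof
    assume "sat (star_list [G]) e"
    then show "semL [G] e" using split_emptyof[of e] by auto
  next
    assume "semL [G] e"
    then obtain e1 e2 where "split2 e e1 e2" "sat G e1" "emp e2" by auto
    then show "sat (star_list [G]) e" using split_emp by fastforce
  qed
next
  case (3 G v va)
  then show ?case by simp
qed




fun asat :: "('d,'u,'b) env \<Rightarrow> (nat \<Rightarrow> 'd) \<Rightarrow> ('u,'b) atom \<Rightarrow> bool" where
  "asat e s (AU A u) = (s u \<in> eU e (Orig A))"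
| "asat e s (AB f u v) = ((s u, s v) \<in> eB e f)"
| "asat e s (AE u v) = (s u = s v)"

lemma sat_atom: "sat (atom_form a) e = asat e (easg e) a"
  by (cases a) auto

lemma sat_conj_list: "sat (conj_list l) e = (\<forall>G\<in>set l. sat G e)"
  by (induction l rule: conj_list.induct) auto

lemma sat_conj_set: "finite S \<Longrightarrow> sat (conj_set S) e = (\<forall>l\<in>S. sat (lit_form l) e)"
  unfolding conj_set_def
proof -
  assume "finite S"
  then have "\<exists>ls. set ls = S \<and> distinct ls" using finite_distinct_list by blast
  then have "set (SOME ls. set ls = S \<and> distinct ls) = S" by (metis (mono_tags, lifting) someI_ex)
  then show "sat (conj_list (map lit_form (SOME ls. set ls = S \<and> distinct ls))) e = (\<forall>l\<in>S. sat (lit_form l) e)"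
    by (simp add: sat_conj_list)
qed

lemma atoms_over_eq: "atoms_over V = (\<lambda>(A,u). AU A u) ` (UNIV \<times> V) \<union> (\<lambda>(f,u,v). AB f u v) ` (UNIV \<times> V \<times> V)
   \<union> (\<lambda>(u,v). AE u v) ` (V \<times> V)"
  unfolding atoms_over_def by (auto simp: image_iff)

lemma finite_atoms_over: "finite V \<Longrightarrow> finite (atoms_over V :: ('u::finite,'b::finite) atom set)"
  unfolding atoms_over_eq by auto

lemma complete_finite: assumes "finite A" "complete_over A S" shows "finite S"
proof -
  have "S \<subseteq> PosL ` A \<union> NegL ` A"
  proof
    fix l assume "l \<in> S" then show "l \<in> PosL ` A \<union> NegL ` A"
      using assms(2) unfolding complete_over_def by (cases l) auto
  qed
  then show ?thesis using assms(1) finite_subset by blast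
qed

lemma complete_sat:
  assumes "finite A" "complete_over A S"
  shows "sat (conj_set S) e = (\<forall>a\<in>A. asat e (easg e) a = (PosL a \<in> S))"
proof -
  have fs: "finite S" using complete_finite assms by blast
  show ?thesis
  proof
    assume h: "sat (conj_set S) e"
    show "\<forall>a\<in>A. asat e (easg e) a = (PosL a \<in> S)"
    proof
      fix a assume "a \<in> A"
      then have "(PosL a \<in> S) \<noteq> (NegL a \<in> S)" using assms(2) unfolding complete_over_def by blast
      then show "asat e (easg e) a = (PosL a \<in> S)"
        using h fs by (auto simp: sat_conj_set sat_atom)
    qed
  next
    assume h: "\<forall>a\<in>A. asat e (easg e) a = (PosL a \<in> S)"
    show "sat (conj_set S) e"
      unfolding sat_conj_set[OF fs]
    proof
      fix l assume l: "l \<in> S"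
      then have la: "lit_atom l \<in> A" using assms(2) unfolding complete_over_def by blast
      show "sat (lit_form l) e"
      proof (cases l)
        case (PosL a) then show ?thesis using h l la by (auto simp: sat_atom)
      next
        case (NegL a)
        then have "PosL a \<notin> S" using l la assms(2) unfolding complete_over_def by force
        then show ?thesis using h l la NegL by (auto simp: sat_atom)
      qed
    qed
  qed
qed

lemma complete_posset: "complete_over A S \<Longrightarrow> posset S \<subseteq> {a\<in>A. \<not> is_eq_atom a}"
  unfolding complete_over_def posset_def by force

lemma complete_unique:
  assumes "complete_over A S" "complete_over A S'" "posset S = posset S'"
  shows "S = S'"
proof -
  have pos: "PosL a \<in> S \<longleftrightarrow> PosL a \<in> S'" if "a \<in> A" for a
  proof (cases "is_eq_atom a")
    case True
    then obtain u v where "a = AE u v" by (cases a) auto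
    then show ?thesis using assms that unfolding complete_over_def by blast
  next
    case False
    then show ?thesis using assms(3) unfolding posset_def by blast
  qed
  have neg: "NegL a \<in> S \<longleftrightarrow> NegL a \<in> S'" if "a \<in> A" for a
    using pos[OF that] assms(1,2) that unfolding complete_over_def by blast
  show ?thesis
  proof (rule set_eqI)
    fix l show "l \<in> S \<longleftrightarrow> l \<in> S'"
    proof (cases l)
      case (PosL a) then show ?thesis using pos assms(1,2) unfolding complete_over_def
        by (metis lit_atom.simps(1))
    next
      case (NegL a) then show ?thesis using neg assms(1,2) unfolding complete_over_def
        by (metis lit_atom.simps(2))
    qed
  qed
qed

lemma complete_exists:
  assumes "P \<subseteq> {a\<in>A. \<not> is_eq_atom a}"
  shows "\<exists>S. complete_over A S \<and> posset S = P"
proof -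
  define Q where "Q a \<longleftrightarrow> a \<in> P \<or> (\<exists>u. a = AE u u)" for a :: "('a,'b) atom"
  define S where "S = {PosL a | a. a \<in> A \<and> Q a} \<union> {NegL a | a. a \<in> A \<and> \<not> Q a}"
  have "complete_over A S"
    unfolding complete_over_def S_def Q_def using assms by auto
  moreover have "posset S = P"
    unfolding posset_def S_def Q_def using assms by auto
  ultimately show ?thesis by blast
qed

lemma complete_the:
  assumes "P \<subseteq> {a\<in>A. \<not> is_eq_atom a}"
  shows "complete_over A (THE S. complete_over A S \<and> posset S = P) \<and>
         posset (THE S. complete_over A S \<and> posset S = P) = P"
proof -
  obtain S where S: "complete_over A S \<and> posset S = P" using complete_exists[OF assms] by blast
  have "(THE S. complete_over A S \<and> posset S = P) = S"
    by (rule the_equality) (use S complete_unique in blast)+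
  then show ?thesis using S by simp
qed

definition xA :: "nat list \<Rightarrow> nat \<Rightarrow> ('u,'b) atom set" where
  "xA xs x = {a \<in> atoms_over (insert x (set xs)). x \<in> atom_vars a}"

definition xatoms :: "nat list \<Rightarrow> nat \<Rightarrow> ('u,'b) atom set" where
  "xatoms xs x = {a \<in> xA xs x. \<not> is_eq_atom a}"

definition vatoms :: "nat list \<Rightarrow> ('u,'b) atom set" where
  "vatoms xs = {a \<in> atoms_over (set xs). \<not> is_eq_atom a}"

lemma ext_iff: "T \<in> ext xs x \<longleftrightarrow> complete_over (xA xs x) T"
  unfolding ext_def xA_def by simp

lemma finite_xA: "finite (xA xs x :: ('u::finite,'b::finite) atom set)"
  unfolding xA_def using finite_atoms_over[of "insert x (set xs)"] by auto

lemma ext_posset: "T \<in> ext xs x \<Longrightarrow> posset T \<subseteq> xatoms xs x"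
  using complete_posset unfolding ext_iff xatoms_def by blast

lemma gccat_posset: "is_gccat xs F \<Longrightarrow> posset F \<subseteq> vatoms xs"
  using complete_posset unfolding is_gccat_def vatoms_def by blast

lemma ext_the:
  assumes "P \<subseteq> xatoms xs x"
  shows "(THE T. T \<in> ext xs x \<and> posset T = P) \<in> ext xs x \<and> posset (THE T. T \<in> ext xs x \<and> posset T = P) = P"
  using complete_the[of P "xA xs x"] assms unfolding ext_iff xatoms_def by auto

lemma gccat_the:
  assumes "P \<subseteq> vatoms xs"
  shows "is_gccat xs (THE T. is_gccat xs T \<and> posset T = P) \<and> posset (THE T. is_gccat xs T \<and> posset T = P) = P"
  using complete_the[of P "atoms_over (set xs)"] assms unfolding is_gccat_def vatoms_def by auto

lemma oplus_ok:
  assumes "T1 \<in> ext xs x" "T2 \<in> ext xs x"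
  shows "oplus xs x T1 T2 \<in> ext xs x \<and> posset (oplus xs x T1 T2) = posset T1 \<union> posset T2"
  unfolding oplus_def using ext_the[of "posset T1 \<union> posset T2" xs x] ext_posset[OF assms(1)] ext_posset[OF assms(2)]
  by auto

lemma otimes_ok:
  assumes "is_gccat xs F1" "is_gccat xs F2"
  shows "is_gccat xs (otimes xs F1 F2) \<and> posset (otimes xs F1 F2) = posset F1 \<union> posset F2"
  unfolding otimes_def using gccat_the[of "posset F1 \<union> posset F2" xs] gccat_posset[OF assms(1)] gccat_posset[OF assms(2)]
  by auto

definition prof :: "nat list \<Rightarrow> nat \<Rightarrow> ('d,'u,'b) env \<Rightarrow> 'd \<Rightarrow> ('u,'b) atom set" where
  "prof xs x e d = {a \<in> xatoms xs x. asat e ((easg e)(x := d)) a}"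

definition profV :: "nat list \<Rightarrow> ('d,'u,'b) env \<Rightarrow> ('u,'b) atom set" where
  "profV xs e = {a \<in> vatoms xs. asat e (easg e) a}"

lemma asat_upd[simp]: "asat (upd e v d) s a = asat e s a"
  by (cases a) (auto simp: upd_def)

lemma easg_upd[simp]: "easg (upd e v d) = (easg e)(v := d)" "edom (upd e v d) = edom e"
  "eU (upd e v d) = eU e" "eB (upd e v d) = eB e"
  by (auto simp: upd_def)

lemma char_gccat:
  assumes "is_gccat xs (F :: ('u::finite,'b::finite) lit set)"
  shows "sat (conj_set F) e \<longleftrightarrow> inj_on (easg e) (set xs) \<and> profV xs e = posset F"
proof -
  let ?A = "atoms_over (set xs) :: ('u,'b) atom set"
  have fin: "finite ?A" by (rule finite_atoms_over) simp
  have c: "complete_over ?A F" using assms unfolding is_gccat_def .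
  have ps: "posset F \<subseteq> vatoms xs" using gccat_posset[OF assms] .
  have "sat (conj_set F) e = (\<forall>a\<in>?A. asat e (easg e) a = (PosL a \<in> F))"
    using complete_sat[OF fin c] .
  also have "\<dots> = ((\<forall>u\<in>set xs. \<forall>v\<in>set xs. (easg e u = easg e v) = (u = v)) \<and>
                   (\<forall>a\<in>vatoms xs. asat e (easg e) a = (a \<in> posset F)))"
  proof
    assume h: "\<forall>a\<in>?A. asat e (easg e) a = (PosL a \<in> F)"
    have 1: "\<forall>u\<in>set xs. \<forall>v\<in>set xs. (easg e u = easg e v) = (u = v)"
    proof (intro ballI)
      fix u v assume "u \<in> set xs" "v \<in> set xs"
      then have "AE u v \<in> ?A" unfolding atoms_over_def by auto
      then show "(easg e u = easg e v) = (u = v)" using h c unfolding complete_over_def by auto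
    qed
    have 2: "\<forall>a\<in>vatoms xs. asat e (easg e) a = (a \<in> posset F)"
      using h unfolding vatoms_def posset_def by auto
    show "(\<forall>u\<in>set xs. \<forall>v\<in>set xs. (easg e u = easg e v) = (u = v)) \<and>
          (\<forall>a\<in>vatoms xs. asat e (easg e) a = (a \<in> posset F))" using 1 2 by blast
  next
    assume h: "(\<forall>u\<in>set xs. \<forall>v\<in>set xs. (easg e u = easg e v) = (u = v)) \<and>
          (\<forall>a\<in>vatoms xs. asat e (easg e) a = (a \<in> posset F))"
    show "\<forall>a\<in>?A. asat e (easg e) a = (PosL a \<in> F)"
    proof
      fix a assume a: "a \<in> ?A"
      show "asat e (easg e) a = (PosL a \<in> F)"
      proof (cases "is_eq_atom a")
        case True
        then obtain u v where uv: "a = AE u v" by (cases a) auto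
        then have "u \<in> set xs" "v \<in> set xs" using a unfolding atoms_over_def by auto
        then show ?thesis using h c a uv unfolding complete_over_def by auto
      next
        case False
        then show ?thesis using h a unfolding vatoms_def posset_def by auto
      qed
    qed
  qed
  also have "\<dots> = (inj_on (easg e) (set xs) \<and> profV xs e = posset F)"
    unfolding inj_on_def profV_def using ps by blast
  finally show ?thesis .
qed

lemma char_ext:
  assumes "T \<in> ext xs x" "d \<notin> easg e ` set xs" "x \<notin> set xs"
  shows "sat (conj_set (T :: ('u::finite,'b::finite) lit set)) (upd e x d) \<longleftrightarrow> prof xs x e d = posset T"
proof -
  let ?A = "xA xs x :: ('u,'b) atom set"
  let ?s = "(easg e)(x := d)"
  have c: "complete_over ?A T" using assms(1) ext_iff by blast
  have ps: "posset T \<subseteq> xatoms xs x" using ext_posset[OF assms(1)] .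
  have "sat (conj_set T) (upd e x d) = (\<forall>a\<in>?A. asat e ?s a = (PosL a \<in> T))"
    using complete_sat[OF finite_xA c, of "upd e x d"] by simp
  also have "\<dots> = (\<forall>a\<in>xatoms xs x. asat e ?s a = (a \<in> posset T))"
  proof
    assume h: "\<forall>a\<in>?A. asat e ?s a = (PosL a \<in> T)"
    then show "\<forall>a\<in>xatoms xs x. asat e ?s a = (a \<in> posset T)"
      unfolding xatoms_def posset_def by auto
  next
    assume h: "\<forall>a\<in>xatoms xs x. asat e ?s a = (a \<in> posset T)"
    show "\<forall>a\<in>?A. asat e ?s a = (PosL a \<in> T)"
    proof
      fix a assume a: "a \<in> ?A"
      show "asat e ?s a = (PosL a \<in> T)"
      proof (cases "is_eq_atom a")
        case True
        then obtain u v where uv: "a = AE u v" by (cases a) auto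
        then have uv2: "u \<in> insert x (set xs)" "v \<in> insert x (set xs)" "x = u \<or> x = v"
          using a unfolding atoms_over_def xA_def by auto
        have "(?s u = ?s v) = (u = v)" using uv2 assms(2,3) by auto
        then show ?thesis using c a uv unfolding complete_over_def by auto
      next
        case False
        then show ?thesis using h a unfolding xatoms_def posset_def by auto
      qed
    qed
  qed
  also have "\<dots> = (prof xs x e d = posset T)"
    unfolding prof_def using ps by blast
  finally show ?thesis .
qed




definition NN :: "nat list \<Rightarrow> ('d,'u,'b) env \<Rightarrow> 'd set" where
  "NN xs e = edom e - easg e ` set xs"

definition mko :: "('d,'u,'b) env \<Rightarrow> 'd \<Rightarrow> nat set \<Rightarrow> bool" where
  "mko e d m \<longleftrightarrow> (d \<in> eU e B1) = (1 \<in> m) \<and> (d \<in> eU e B2) = (2 \<in> m)"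

lemma sat_mark: "sat (mark m x) (upd e x d) = mko e d m"
  unfolding mark_def mko_def by (auto simp: upd_def)

context
  fixes xs :: "nat list" and x :: nat
  assumes xnot: "x \<notin> set xs"
begin

lemma sat_delta: "sat (delta xs x) (upd e x d) = (d \<notin> easg e ` set xs)"
  unfolding delta_def sat_conj_list using xnot by (auto simp: upd_def)

lemma sat_E0: "sat (E0 xs :: ('u::finite,'b::finite) form) e \<longleftrightarrow> inj_on (easg e) (set xs) \<and> profV xs e = {}"
proof -
  let ?F = "THE F. is_gccat xs F \<and> posset F = ({} :: ('u,'b) atom set)"
  have h: "is_gccat xs ?F \<and> posset ?F = {}" using gccat_the[of "{}" xs] by simp
  show ?thesis unfolding E0_def using char_gccat[of xs ?F e] h by simp
qed

lemma sat_empx: "d \<notin> easg e ` set xs \<Longrightarrow>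
   sat (empx xs x :: ('u::finite,'b::finite) form) (upd e x d) \<longleftrightarrow> prof xs x e d = {}"
proof -
  assume d: "d \<notin> easg e ` set xs"
  let ?F = "THE T. T \<in> ext xs x \<and> posset T = ({} :: ('u,'b) atom set)"
  have h: "?F \<in> ext xs x \<and> posset ?F = {}" using ext_the[of "{}" xs x] by simp
  show ?thesis unfolding empx_def using char_ext[OF _ d xnot, of ?F] h by simp
qed

lemma sat_conjT: "T \<in> ext xs x \<Longrightarrow> d \<notin> easg e ` set xs \<Longrightarrow>
   sat (conj_set (T :: ('u::finite,'b::finite) lit set)) (upd e x d) \<longleftrightarrow> prof xs x e d = posset T"
  by (rule char_ext[OF _ _ xnot])

lemma char_GE: "sat (GE xs x :: ('u::finite,'b::finite) form) e \<longleftrightarrow>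
   inj_on (easg e) (set xs) \<and> profV xs e = {} \<and> (\<forall>d\<in>NN xs e. prof xs x e d = {} \<and> mko e d {})"
  unfolding GE_def NN_def by (auto simp: sat_E0 sat_delta sat_empx sat_mark)

lemma char_KF: "is_gccat xs F \<Longrightarrow> sat (KF xs x F :: ('u::finite,'b::finite) form) e \<longleftrightarrow>
   inj_on (easg e) (set xs) \<and> profV xs e = posset F \<and> (\<forall>d\<in>NN xs e. prof xs x e d = {} \<and> mko e d {})"
  unfolding KF_def NN_def by (auto simp: char_gccat sat_delta sat_empx sat_mark)

lemma char_Any: "T \<in> ext xs x \<Longrightarrow> sat (AnyF xs x m T :: ('u::finite,'b::finite) form) e \<longleftrightarrow>
   inj_on (easg e) (set xs) \<and> profV xs e = {} \<and>
   (\<forall>d\<in>NN xs e. (prof xs x e d = posset T \<and> mko e d m) \<or> (prof xs x e d = {} \<and> mko e d {}))"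
  unfolding AnyF_def NN_def by (auto simp: sat_E0 sat_delta sat_empx sat_mark sat_conjT)

lemma char_One: "T \<in> ext xs x \<Longrightarrow> sat (OneF xs x m T :: ('u::finite,'b::finite) form) e \<longleftrightarrow>
   sat (AnyF xs x m T) e \<and> card {d\<in>NN xs e. prof xs x e d = posset T \<and> mko e d m} = 1"
proof -
  assume T: "T \<in> ext xs x"
  have "{d \<in> edom e. sat (Conj (delta xs x) (Conj (conj_set T) (mark m x))) (upd e x d)}
      = {d\<in>NN xs e. prof xs x e d = posset T \<and> mko e d m}"
    unfolding NN_def using T by (auto simp: sat_delta sat_conjT sat_mark)
  then show ?thesis unfolding OneF_def by simp
qed

end



lemma asat_split: "split2 e e1 e2 \<Longrightarrow> \<not> is_eq_atom a \<Longrightarrow> asat e s a = (asat e1 s a \<or> asat e2 s a)"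
  by (cases a) (auto simp: split2_def)

lemma asat_split_disj: "split2 e e1 e2 \<Longrightarrow> \<not> is_eq_atom a \<Longrightarrow> asat e1 s a \<Longrightarrow> asat e2 s a \<Longrightarrow> False"
  by (cases a) (auto simp: split2_def)

lemma split_basic: "split2 e e1 e2 \<Longrightarrow> easg e1 = easg e \<and> edom e1 = edom e \<and> NN xs e1 = NN xs e"
  by (auto simp: split2_def NN_def)

lemma split_prof: "split2 e e1 e2 \<Longrightarrow> prof xs x e d = prof xs x e1 d \<union> prof xs x e2 d"
  unfolding prof_def xatoms_def using asat_split[of e e1 e2] by (auto simp: split2_def)

lemma split_profV: "split2 e e1 e2 \<Longrightarrow> profV xs e = profV xs e1 \<union> profV xs e2"
  unfolding profV_def vatoms_def using asat_split[of e e1 e2] by (auto simp: split2_def)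

lemma split_B: "split2 e e1 e2 \<Longrightarrow> (d \<in> eU e P) = (d \<in> eU e1 P \<or> d \<in> eU e2 P)"
  by (auto simp: split2_def)

datatype ('u,'d,'b) gf = GU "'u usym" 'd | GB 'b 'd 'd

fun gfa :: "(nat \<Rightarrow> 'd) \<Rightarrow> ('u,'b) atom \<Rightarrow> ('u,'d,'b) gf" where
  "gfa s (AU A u) = GU (Orig A) (s u)"
| "gfa s (AB f u v) = GB f (s u) (s v)"
| "gfa s (AE u v) = GU B1 (s u)"

definition restr :: "('d,'u,'b) env \<Rightarrow> ('u,'d,'b) gf set \<Rightarrow> ('d,'u,'b) env" where
  "restr e S = e\<lparr>eU := \<lambda>P. {d \<in> eU e P. GU P d \<in> S}, eB := \<lambda>f. {(p,q) \<in> eB e f. GB f p q \<in> S}\<rparr>"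

lemma restr_split: "split2 e (restr e S) (restr e (- S))"
  unfolding split2_def restr_def by auto

lemma restr_simps[simp]: "easg (restr e S) = easg e" "edom (restr e S) = edom e"
  "eU (restr e S) P = {d \<in> eU e P. GU P d \<in> S}"
  by (auto simp: restr_def)

lemma NN_restr[simp]: "NN xs (restr e S) = NN xs e"
  by (simp add: NN_def)

lemma asat_restr: "\<not> is_eq_atom a \<Longrightarrow> asat (restr e S) s a = (asat e s a \<and> gfa s a \<in> S)"
  by (cases a) (auto simp: restr_def)

lemma prof_restr: "prof xs x (restr e S) d = {a \<in> prof xs x e d. gfa ((easg e)(x := d)) a \<in> S}"
  unfolding prof_def xatoms_def using asat_restr by auto

lemma profV_restr: "profV xs (restr e S) = {a \<in> profV xs e. gfa (easg e) a \<in> S}"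
  unfolding profV_def vatoms_def using asat_restr by auto

context
  fixes xs :: "nat list" and x :: nat
  assumes xnot: "x \<notin> set xs"
begin

lemma upd_val:
  fixes s :: "nat \<Rightarrow> 'd"
  assumes "inj_on s (set xs)" "d \<notin> s ` set xs" "d' \<notin> s ` set xs"
    "u \<in> insert x (set xs)" "u' \<in> insert x (set xs)" "(s(x := d)) u = (s(x := d')) u'"
  shows "(u = x \<longleftrightarrow> u' = x) \<and> (u = x \<longrightarrow> d = d') \<and> (u = u')"
  using assms xnot unfolding inj_on_def by (cases "u = x"; cases "u' = x") auto

lemma xatoms_AU: "AU A u \<in> (xatoms xs x :: ('u,'b) atom set) \<Longrightarrow> u = x"
  unfolding xatoms_def xA_def by simp

lemma xatoms_AB: "AB f u v \<in> (xatoms xs x :: ('u,'b) atom set) \<Longrightarrow> u \<in> insert x (set xs) \<and> v \<in> insert x (set xs) \<and> (x = u \<or> x = v)"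
  unfolding xatoms_def xA_def atoms_over_def by auto

lemma xatoms_AE: "AE u v \<notin> (xatoms xs x :: ('u,'b) atom set)"
  unfolding xatoms_def by simp

lemma vatoms_AU: "AU A u \<in> (vatoms xs :: ('u,'b) atom set) \<Longrightarrow> u \<in> set xs"
  unfolding vatoms_def atoms_over_def by auto

lemma vatoms_AB: "AB f u v \<in> (vatoms xs :: ('u,'b) atom set) \<Longrightarrow> u \<in> set xs \<and> v \<in> set xs"
  unfolding vatoms_def atoms_over_def by auto

lemma vatoms_AE: "AE u v \<notin> (vatoms xs :: ('u,'b) atom set)"
  unfolding vatoms_def by simp

lemma inj_x:
  fixes s :: "nat \<Rightarrow> 'd" and a a' :: "('u,'b) atom"
  assumes "inj_on s (set xs)" "d \<notin> s ` set xs" "d' \<notin> s ` set xs"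
    "a \<in> xatoms xs x" "a' \<in> xatoms xs x" "gfa (s(x := d)) a = gfa (s(x := d')) a'"
  shows "d = d' \<and> a = a'"
proof -
  note U = upd_val[OF assms(1-3)]
  show ?thesis
  proof (cases a)
    case a: (AU A u)
    have u: "u = x" using assms(4) unfolding a by (rule xatoms_AU)
    show ?thesis
    proof (cases a')
      case a': (AU A' u')
      have "u' = x" using assms(5) unfolding a' by (rule xatoms_AU)
      then show ?thesis using u assms(6) unfolding a a' by simp
    next
      case a': (AB f' u' v') then show ?thesis using assms(6) unfolding a a' by simp
    next
      case a': (AE u' v') show ?thesis using assms(5) unfolding a' by (rule notE[OF xatoms_AE[of u' v']])
    qed
  next
    case a: (AB f u v)
    have uv: "u \<in> insert x (set xs) \<and> v \<in> insert x (set xs) \<and> (x = u \<or> x = v)"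
      using assms(4) unfolding a by (rule xatoms_AB)
    show ?thesis
    proof (cases a')
      case a': (AU A' u')
      then show ?thesis using assms(6) unfolding a a' by simp
    next
      case a': (AB f' u' v')
      have uv': "u' \<in> insert x (set xs) \<and> v' \<in> insert x (set xs)"
        using xatoms_AB[of f' u' v'] assms(5) unfolding a' by blast
      have e1: "(s(x := d)) u = (s(x := d')) u'" "(s(x := d)) v = (s(x := d')) v'" "f = f'"
        using assms(6) unfolding a a' gfa.simps gf.inject by simp_all
      have r1: "(u = x \<longrightarrow> d = d') \<and> u = u'" using U[OF _ _ e1(1)] uv uv' by blast
      have r2: "(v = x \<longrightarrow> d = d') \<and> v = v'" using U[OF _ _ e1(2)] uv uv' by blast
      have "d = d'" using r1 r2 uv by blast
      then show ?thesis using r1 r2 e1(3) unfolding a a' by simp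
    next
      case a': (AE u' v')
      show ?thesis using assms(5) unfolding a' by (rule notE[OF xatoms_AE[of u' v']])
    qed
  next
    case a: (AE u v)
    show ?thesis using assms(4) unfolding a by (rule notE[OF xatoms_AE[of u v]])
  qed
qed

lemma inj_v:
  fixes s :: "nat \<Rightarrow> 'd" and a a' :: "('u,'b) atom"
  assumes "inj_on s (set xs)" "a \<in> vatoms xs" "a' \<in> vatoms xs" "gfa s a = gfa s a'"
  shows "a = a'"
proof (cases a)
  case a: (AU A u)
  have u: "u \<in> set xs" using assms(2) unfolding a by (rule vatoms_AU)
  show ?thesis
  proof (cases a')
    case a': (AU A' u')
    have "u' \<in> set xs" using assms(3) unfolding a' by (rule vatoms_AU)
    then show ?thesis using u assms(1,4) unfolding a a' inj_on_def by auto
  next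
    case a': (AB f' u' v') then show ?thesis using assms(4) unfolding a a' by simp
  next
    case a': (AE u' v') show ?thesis using assms(3) unfolding a' by (rule notE[OF vatoms_AE[of u' v']])
  qed
next
  case a: (AB f u v)
  have u: "u \<in> set xs \<and> v \<in> set xs" using assms(2) unfolding a by (rule vatoms_AB)
  show ?thesis
  proof (cases a')
    case a': (AU A' u') then show ?thesis using assms(4) unfolding a a' by simp
  next
    case a': (AB f' u' v')
    have "u' \<in> set xs \<and> v' \<in> set xs" using assms(3) unfolding a' by (rule vatoms_AB)
    then show ?thesis using u assms(1,4) unfolding a a' inj_on_def by auto
  next
    case a': (AE u' v') show ?thesis using assms(3) unfolding a' by (rule notE[OF vatoms_AE[of u' v']])
  qed
next
  case a: (AE u v) show ?thesis using assms(2) unfolding a by (rule notE[OF vatoms_AE[of u v]])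
qed

end



fun okc :: "nat list \<Rightarrow> nat \<Rightarrow> ('u,'b) sconj \<Rightarrow> bool" where
  "okc xs x (SK F) = is_gccat xs F"
| "okc xs x (SOne m T) = (T \<in> ext xs x)"
| "okc xs x (SAny m T) = (T \<in> ext xs x)"
| "okc xs x SFalse = True"
| "okc xs x SGE = True"

definition cnt :: "nat list \<Rightarrow> nat \<Rightarrow> ('d,'u,'b) env \<Rightarrow> ('u,'b) lit set \<Rightarrow> nat set \<Rightarrow> 'd set" where
  "cnt xs x e T m = {d \<in> NN xs e. prof xs x e d = posset T \<and> mko e d m}"

definition agree :: "nat list \<Rightarrow> nat \<Rightarrow> ('d,'u,'b) env \<Rightarrow> ('d,'u,'b) env \<Rightarrow> bool" where
  "agree xs x e e1 \<longleftrightarrow> easg e1 = easg e \<and> NN xs e1 = NN xs e \<and> profV xs e1 = profV xs e \<and>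
     (\<forall>d\<in>NN xs e. prof xs x e1 d = prof xs x e d \<and> (\<forall>m. mko e1 d m = mko e d m))"

lemma agree_sat:
  fixes c :: "('u::finite,'b::finite) sconj"
  assumes xnot: "x \<notin> set xs" and ok: "okc xs x c" and ag: "agree xs x e e1"
  shows "sat (sform xs x c) e1 = sat (sform xs x c) e"
proof -
  have a1: "easg e1 = easg e" "NN xs e1 = NN xs e" "profV xs e1 = profV xs e"
    and a2: "\<And>d. d \<in> NN xs e \<Longrightarrow> prof xs x e1 d = prof xs x e d"
    and a3: "\<And>d m. d \<in> NN xs e \<Longrightarrow> mko e1 d m = mko e d m"
    using ag unfolding agree_def by auto
  have cn: "cnt xs x e1 T m = cnt xs x e T m" for T m
    unfolding cnt_def using a1 a2 a3 by auto
  show ?thesis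
  proof (cases c)
    case (SK F)
    then show ?thesis using ok a1 a2 a3 by (simp add: char_KF[OF xnot])
  next
    case SFalse then show ?thesis by simp
  next
    case SGE then show ?thesis using a1 a2 a3 by (simp add: char_GE[OF xnot])
  next
    case (SOne m T)
    then show ?thesis using ok a1 a2 a3 cn[of T m] unfolding cnt_def
      by (simp add: char_One[OF xnot] char_Any[OF xnot])
  next
    case (SAny m T)
    then show ?thesis using ok a1 a2 a3 by (simp add: char_Any[OF xnot])
  qed
qed

lemma sat_dist:
  fixes c :: "('u::finite,'b::finite) sconj"
  assumes xnot: "x \<notin> set xs" and ok: "okc xs x c" and s: "sat (sform xs x c) e"
  shows "inj_on (easg e) (set xs)"
  using s ok by (cases c) (auto simp: char_KF[OF xnot] char_GE[OF xnot] char_One[OF xnot] char_Any[OF xnot])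

lemma emptyof_data[simp]: "easg (emptyof e) = easg e" "NN xs (emptyof e) = NN xs e"
  "profV xs (emptyof e) = {}" "prof xs x (emptyof e) d = {}" "mko (emptyof e) d m = (1 \<notin> m \<and> 2 \<notin> m)"
proof -
  have "\<not> asat (emptyof e) s a" if "\<not> is_eq_atom a" for s a
    using that by (cases a) (auto simp: emptyof_def)
  then show "profV xs (emptyof e) = {}" "prof xs x (emptyof e) d = {}"
    unfolding profV_def vatoms_def prof_def xatoms_def by auto
qed (auto simp: emptyof_def NN_def mko_def)

lemma GE_emptyof:
  assumes xnot: "x \<notin> set xs" and "inj_on (easg e) (set xs)"
  shows "sat (GE xs x :: ('u::finite,'b::finite) form) (emptyof e)"
  using assms by (simp add: char_GE[OF xnot])

lemma GE_unit_agree: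
  assumes xnot: "x \<notin> set xs" and sp: "split2 e e1 e2"
    and g: "sat (GE xs x :: ('u::finite,'b::finite) form) e2"
  shows "agree xs x e e1"
proof -
  have g2: "profV xs e2 = {}" "\<And>d. d \<in> NN xs e2 \<Longrightarrow> prof xs x e2 d = {} \<and> mko e2 d {}"
    using g by (auto simp: char_GE[OF xnot])
  have b: "easg e1 = easg e" "NN xs e1 = NN xs e" "NN xs e2 = NN xs e"
    using split_basic[OF sp] split_basic[OF split_comm[OF sp]] by auto
  show ?thesis unfolding agree_def
  proof (intro conjI ballI allI)
    show "easg e1 = easg e" "NN xs e1 = NN xs e" using b by auto
    show "profV xs e1 = profV xs e" using split_profV[OF sp] g2 by auto
  next
    fix d assume d: "d \<in> NN xs e"
    then show "prof xs x e1 d = prof xs x e d" using split_prof[OF sp] g2(2)[of d] b by auto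
  next
    fix d m assume d: "d \<in> NN xs e"
    then have "mko e2 d {}" using g2(2)[of d] b by auto
    then show "mko e1 d m = mko e d m" using split_B[OF sp] unfolding mko_def by auto
  qed
qed

lemma GE_unit:
  fixes c :: "('u::finite,'b::finite) sconj"
  assumes xnot: "x \<notin> set xs" and ok: "okc xs x c" and sp: "split2 e e1 e2"
    and g: "sat (GE xs x) e2" and s: "sat (sform xs x c) e1"
  shows "sat (sform xs x c) e"
  using agree_sat[OF xnot ok GE_unit_agree[OF xnot sp g]] s by simp

lemma Any_merge:
  assumes xnot: "x \<notin> set xs" and T: "T \<in> ext xs x" and sp: "split2 e e1 e2"
    and s1: "sat (AnyF xs x m T :: ('u::finite,'b::finite) form) e1" and s2: "sat (AnyF xs x m T) e2"
  shows "sat (AnyF xs x m T) e"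
proof -
  have b: "easg e1 = easg e" "NN xs e1 = NN xs e" "NN xs e2 = NN xs e"
    using split_basic[OF sp] split_basic[OF split_comm[OF sp]] by auto
  have h1: "inj_on (easg e1) (set xs)" "profV xs e1 = {}"
    "\<And>d. d \<in> NN xs e1 \<Longrightarrow> (prof xs x e1 d = posset T \<and> mko e1 d m) \<or> (prof xs x e1 d = {} \<and> mko e1 d {})"
    using s1 by (auto simp: char_Any[OF xnot T])
  have h2: "profV xs e2 = {}"
    "\<And>d. d \<in> NN xs e2 \<Longrightarrow> (prof xs x e2 d = posset T \<and> mko e2 d m) \<or> (prof xs x e2 d = {} \<and> mko e2 d {})"
    using s2 by (auto simp: char_Any[OF xnot T])
  show ?thesis unfolding char_Any[OF xnot T]
  proof (intro conjI ballI)
    show "inj_on (easg e) (set xs)" using h1 b by simp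
    show "profV xs e = {}" using split_profV[OF sp] h1 h2 by simp
  next
    fix d assume d: "d \<in> NN xs e"
    have p: "prof xs x e d = prof xs x e1 d \<union> prof xs x e2 d" using split_prof[OF sp] .
    have B: "(d \<in> eU e P) = (d \<in> eU e1 P \<or> d \<in> eU e2 P)" for P using split_B[OF sp] .
    show "(prof xs x e d = posset T \<and> mko e d m) \<or> (prof xs x e d = {} \<and> mko e d {})"
      using h1(3)[of d] h2(2)[of d] d b p B[of B1] B[of B2] unfolding mko_def by auto
  qed
qed

lemma GE_Any:
  assumes xnot: "x \<notin> set xs" and T: "T \<in> ext xs x" and g: "sat (GE xs x :: ('u::finite,'b::finite) form) e"
  shows "sat (AnyF xs x m T) e"
  using g by (auto simp: char_Any[OF xnot T] char_GE[OF xnot])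

lemma One_Any:
  assumes xnot: "x \<notin> set xs" and T: "T \<in> ext xs x" and g: "sat (OneF xs x m T :: ('u::finite,'b::finite) form) e"
  shows "sat (AnyF xs x m T) e"
  using g by (simp add: char_One[OF xnot T])




lemma gfa_notB:
  "a \<in> xatoms xs x \<Longrightarrow> gfa s a \<noteq> GU B1 d \<and> gfa s a \<noteq> GU B2 d"
  by (cases a) (auto simp: xatoms_def)

lemma split_Any12:
  fixes T1 T2 :: "('u::finite,'b::finite) lit set" and e :: "('d,'u,'b) env"
  assumes xnot: "x \<notin> set xs" and T1: "T1 \<in> ext xs x" and T2: "T2 \<in> ext xs x"
    and dj: "posset T1 \<inter> posset T2 = {}"
    and s: "sat (AnyF xs x {1,2} (oplus xs x T1 T2)) e"
  shows "\<exists>e1 e2. split2 e e1 e2 \<and> sat (AnyF xs x {1} T1) e1 \<and> sat (AnyF xs x {2} T2) e2 \<and>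
     cnt xs x e1 T1 {1} = cnt xs x e (oplus xs x T1 T2) {1,2} \<and>
     cnt xs x e2 T2 {2} = cnt xs x e (oplus xs x T1 T2) {1,2}"
proof -
  define T where "T = oplus xs x T1 T2"
  have T: "T \<in> ext xs x" "posset T = posset T1 \<union> posset T2"
    using oplus_ok[OF T1 T2] unfolding T_def by auto
  have P1: "posset T1 \<subseteq> xatoms xs x" using ext_posset[OF T1] .
  define D where "D = cnt xs x e T {1,2}"
  define sg where "sg d = (easg e)(x := d)" for d
  define S where "S = (\<Union>d\<in>D. gfa (sg d) ` posset T1) \<union> GU B1 ` D"
  have hs: "inj_on (easg e) (set xs)" "profV xs e = {}"
    "\<And>d. d \<in> NN xs e \<Longrightarrow> (prof xs x e d = posset T \<and> mko e d {1,2}) \<or> (prof xs x e d = {} \<and> mko e d {})"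
    using s unfolding T_def[symmetric] by (auto simp: char_Any[OF xnot T(1)])
  have DN: "D \<subseteq> NN xs e" unfolding D_def cnt_def by auto
  have key: "gfa (sg d) a \<in> S \<longleftrightarrow> d \<in> D \<and> a \<in> posset T1"
    if d: "d \<in> NN xs e" and a: "a \<in> xatoms xs x" for d a
  proof
    assume "gfa (sg d) a \<in> S"
    then consider (i) d' a' where "d' \<in> D" "a' \<in> posset T1" "gfa (sg d) a = gfa (sg d') a'"
      | (ii) d' where "d' \<in> D" "gfa (sg d) a = GU B1 d'"
      unfolding S_def by blast
    then show "d \<in> D \<and> a \<in> posset T1"
    proof cases
      case i
      have "d' \<in> NN xs e" using i(1) DN by blast
      then have "d = d' \<and> a = a'"
        using inj_x[OF xnot hs(1) _ _ a _ i(3)[unfolded sg_def]] d P1 i(2) unfolding NN_def by blast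
      then show ?thesis using i by simp
    next
      case ii then show ?thesis using gfa_notB[OF a, of "sg d" d'] by simp
    qed
  next
    assume "d \<in> D \<and> a \<in> posset T1"
    then show "gfa (sg d) a \<in> S" unfolding S_def by blast
  qed
  have nb: "gfa (sg d') a \<noteq> GU B1 d \<and> gfa (sg d') a \<noteq> GU B2 d" if "a \<in> posset T1" for d' a d
    using gfa_notB[of a xs x "sg d'" d] P1 that by blast
  have keyB1: "GU B1 d \<in> S \<longleftrightarrow> d \<in> D" for d
  proof -
    have "GU B1 d \<notin> (\<Union>d'\<in>D. gfa (sg d') ` posset T1)"
    proof
      assume "GU B1 d \<in> (\<Union>d'\<in>D. gfa (sg d') ` posset T1)"
      then obtain d' a where "a \<in> posset T1" "GU B1 d = gfa (sg d') a" by blast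
      then show False using nb[of a d' d] by simp
    qed
    then show ?thesis unfolding S_def by auto
  qed
  have keyB2: "GU B2 d \<notin> S" for d
  proof
    assume "GU B2 d \<in> S"
    then obtain d' a where "a \<in> posset T1" "GU B2 d = gfa (sg d') a" unfolding S_def by blast
    then show False using nb[of a d' d] by simp
  qed
  define e1 where "e1 = restr e S"
  define e2 where "e2 = restr e (- S)"
  have sp: "split2 e e1 e2" unfolding e1_def e2_def by (rule restr_split)
  have pr1: "prof xs x e1 d = {a \<in> prof xs x e d. d \<in> D \<and> a \<in> posset T1}" if "d \<in> NN xs e" for d
    unfolding e1_def prof_restr using key[OF that] unfolding sg_def prof_def by auto
  have pr2: "prof xs x e2 d = {a \<in> prof xs x e d. \<not> (d \<in> D \<and> a \<in> posset T1)}" if "d \<in> NN xs e" for d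
    unfolding e2_def prof_restr using key[OF that] unfolding sg_def prof_def by auto
  have mk1: "mko e1 d m \<longleftrightarrow> ((d \<in> eU e B1 \<and> d \<in> D) = (1 \<in> m) \<and> (2 \<notin> m))" for d m
    unfolding e1_def mko_def using keyB1 keyB2 by auto
  have mk2: "mko e2 d m \<longleftrightarrow> ((d \<in> eU e B1 \<and> d \<notin> D) = (1 \<in> m) \<and> (d \<in> eU e B2) = (2 \<in> m))" for d m
    unfolding e2_def mko_def using keyB1 keyB2 by auto
  have pv1: "profV xs e1 = {}" "profV xs e2 = {}" unfolding e1_def e2_def profV_restr using hs(2) by auto
  have inD: "prof xs x e d = posset T \<and> d \<in> eU e B1 \<and> d \<in> eU e B2" if "d \<in> D" for d
    using that unfolding D_def cnt_def mko_def by auto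
  have notD: "prof xs x e d = {} \<and> d \<notin> eU e B1 \<and> d \<notin> eU e B2" if "d \<in> NN xs e" "d \<notin> D" for d
    using that hs(3)[of d] unfolding D_def cnt_def mko_def by auto
  have A1: "sat (AnyF xs x {1} T1) e1"
    unfolding char_Any[OF xnot T1]
  proof (intro conjI ballI)
    show "inj_on (easg e1) (set xs)" using hs(1) unfolding e1_def by simp
    show "profV xs e1 = {}" using pv1 by simp
  next
    fix d assume "d \<in> NN xs e1"
    then have d: "d \<in> NN xs e" unfolding e1_def by simp
    show "(prof xs x e1 d = posset T1 \<and> mko e1 d {1}) \<or> (prof xs x e1 d = {} \<and> mko e1 d {})"
    proof (cases "d \<in> D")
      case True
      then show ?thesis using inD[OF True] pr1[OF d] T(2) mk1[of d "{1}"] by auto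
    next
      case False
      then show ?thesis using notD[OF d False] pr1[OF d] mk1[of d "{}"] by auto
    qed
  qed
  have A2: "sat (AnyF xs x {2} T2) e2"
    unfolding char_Any[OF xnot T2]
  proof (intro conjI ballI)
    show "inj_on (easg e2) (set xs)" using hs(1) unfolding e2_def by simp
    show "profV xs e2 = {}" using pv1 by simp
  next
    fix d assume "d \<in> NN xs e2"
    then have d: "d \<in> NN xs e" unfolding e2_def by simp
    show "(prof xs x e2 d = posset T2 \<and> mko e2 d {2}) \<or> (prof xs x e2 d = {} \<and> mko e2 d {})"
    proof (cases "d \<in> D")
      case True
      have "prof xs x e2 d = posset T2" using inD[OF True] pr2[OF d] T(2) dj True by auto
      then show ?thesis using inD[OF True] mk2[of d "{2}"] True by auto
    next
      case False
      then show ?thesis using notD[OF d False] pr2[OF d] mk2[of d "{}"] by auto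
    qed
  qed
  have C1: "cnt xs x e1 T1 {1} = D"
  proof (rule set_eqI)
    fix d
    show "d \<in> cnt xs x e1 T1 {1} \<longleftrightarrow> d \<in> D"
    proof
      assume "d \<in> cnt xs x e1 T1 {1}"
      then have "mko e1 d {1}" unfolding cnt_def by auto
      then show "d \<in> D" using mk1[of d "{1}"] by auto
    next
      assume dD: "d \<in> D"
      then have d: "d \<in> NN xs e" using DN by blast
      have "prof xs x e1 d = posset T1" using inD[OF dD] pr1[OF d] T(2) dD by auto
      moreover have "mko e1 d {1}" using inD[OF dD] mk1[of d "{1}"] dD by auto
      ultimately show "d \<in> cnt xs x e1 T1 {1}" using d unfolding cnt_def e1_def by simp
    qed
  qed
  have C2: "cnt xs x e2 T2 {2} = D"
  proof (rule set_eqI)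
    fix d
    show "d \<in> cnt xs x e2 T2 {2} \<longleftrightarrow> d \<in> D"
    proof
      assume a: "d \<in> cnt xs x e2 T2 {2}"
      then have d: "d \<in> NN xs e" "mko e2 d {2}" unfolding cnt_def e2_def by auto
      show "d \<in> D"
      proof (rule ccontr)
        assume "d \<notin> D"
        then show False using notD[OF d(1)] d(2) mk2[of d "{2}"] by auto
      qed
    next
      assume dD: "d \<in> D"
      then have d: "d \<in> NN xs e" using DN by blast
      have "prof xs x e2 d = posset T2" using inD[OF dD] pr2[OF d] T(2) dj dD by auto
      moreover have "mko e2 d {2}" using inD[OF dD] mk2[of d "{2}"] dD by auto
      ultimately show "d \<in> cnt xs x e2 T2 {2}" using d unfolding cnt_def e2_def by simp
    qed
  qed
  show ?thesis using sp A1 A2 C1 C2 unfolding D_def T_def by blast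
qed

lemma split_One12:
  fixes T1 T2 :: "('u::finite,'b::finite) lit set" and e :: "('d,'u,'b) env"
  assumes xnot: "x \<notin> set xs" and T1: "T1 \<in> ext xs x" and T2: "T2 \<in> ext xs x"
    and dj: "posset T1 \<inter> posset T2 = {}"
    and s: "sat (OneF xs x {1,2} (oplus xs x T1 T2)) e"
  shows "\<exists>e1 e2. split2 e e1 e2 \<and> sat (OneF xs x {1} T1) e1 \<and> sat (OneF xs x {2} T2) e2"
proof -
  have T: "oplus xs x T1 T2 \<in> ext xs x" using oplus_ok[OF T1 T2] by auto
  have a: "sat (AnyF xs x {1,2} (oplus xs x T1 T2)) e" "card (cnt xs x e (oplus xs x T1 T2) {1,2}) = 1"
    using s unfolding char_One[OF xnot T] cnt_def by auto
  obtain e1 e2 where o: "split2 e e1 e2" "sat (AnyF xs x {1} T1) e1" "sat (AnyF xs x {2} T2) e2"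
     "cnt xs x e1 T1 {1} = cnt xs x e (oplus xs x T1 T2) {1,2}"
     "cnt xs x e2 T2 {2} = cnt xs x e (oplus xs x T1 T2) {1,2}"
    using split_Any12[OF xnot T1 T2 dj a(1)] by blast
  have "sat (OneF xs x {1} T1) e1" unfolding char_One[OF xnot T1]
    using o(2,4) a(2) unfolding cnt_def by simp
  moreover have "sat (OneF xs x {2} T2) e2" unfolding char_One[OF xnot T2]
    using o(3,5) a(2) unfolding cnt_def by simp
  ultimately show ?thesis using o(1) by blast
qed

lemma split_KF:
  fixes F1 F2 :: "('u::finite,'b::finite) lit set" and e :: "('d,'u,'b) env"
  assumes xnot: "x \<notin> set xs" and F1: "is_gccat xs F1" and F2: "is_gccat xs F2"
    and dj: "posset F1 \<inter> posset F2 = {}"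
    and s: "sat (KF xs x (otimes xs F1 F2)) e"
  shows "\<exists>e1 e2. split2 e e1 e2 \<and> sat (KF xs x F1) e1 \<and> sat (KF xs x F2) e2"
proof -
  have F: "is_gccat xs (otimes xs F1 F2)" "posset (otimes xs F1 F2) = posset F1 \<union> posset F2"
    using otimes_ok[OF F1 F2] by auto
  have P1: "posset F1 \<subseteq> vatoms xs" using gccat_posset[OF F1] .
  have hs: "inj_on (easg e) (set xs)" "profV xs e = posset F1 \<union> posset F2"
    "\<And>d. d \<in> NN xs e \<Longrightarrow> prof xs x e d = {} \<and> mko e d {}"
    using s F by (auto simp: char_KF[OF xnot F(1)])
  define S where "S = gfa (easg e) ` posset F1"
  have key: "gfa (easg e) a \<in> S \<longleftrightarrow> a \<in> posset F1" if a: "a \<in> vatoms xs" for a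
    unfolding S_def using inj_v[OF xnot hs(1) a] P1 by blast
  have pv: "profV xs e \<subseteq> vatoms xs" unfolding profV_def by auto
  define e1 where "e1 = restr e S"
  define e2 where "e2 = restr e (- S)"
  have sp: "split2 e e1 e2" unfolding e1_def e2_def by (rule restr_split)
  have pv1: "profV xs e1 = posset F1"
    unfolding e1_def profV_restr using key pv hs(2) by auto
  have pv2: "profV xs e2 = posset F2"
    unfolding e2_def profV_restr
  proof (rule set_eqI)
    fix a
    show "a \<in> {a \<in> profV xs e. gfa (easg e) a \<in> - S} \<longleftrightarrow> a \<in> posset F2"
      using key[of a] pv hs(2) dj gccat_posset[OF F2] by blast
  qed
  have k1: "sat (KF xs x F1) e1"
    unfolding char_KF[OF xnot F1] using hs pv1 unfolding e1_def prof_restr mko_def by auto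
  have k2: "sat (KF xs x F2) e2"
    unfolding char_KF[OF xnot F2] using hs pv2 unfolding e2_def prof_restr mko_def by auto
  show ?thesis using sp k1 k2 by blast
qed




definition semM :: "nat list \<Rightarrow> nat \<Rightarrow> ('u,'b) sconj multiset \<Rightarrow> ('d,'u,'b) env \<Rightarrow> bool" where
  "semM xs x M e \<longleftrightarrow> (\<exists>l. mset l = M \<and> semL (map (sform xs x) l) e)"

lemma semM_iff: "mset l = M \<Longrightarrow> semM xs x M e = semL (map (sform xs x) l) e"
  unfolding semM_def
proof
  assume "mset l = M" "\<exists>l. mset l = M \<and> semL (map (sform xs x) l) e"
  then obtain l' where "mset l' = M" "semL (map (sform xs x) l') e" by blast
  moreover have "mset (map (sform xs x) l') = mset (map (sform xs x) l)"
    using \<open>mset l = M\<close> calculation(1) by simp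
  ultimately show "semL (map (sform xs x) l) e" using semL_perm by blast
qed blast

lemma semM_plus: "semM xs x (A + B) e \<longleftrightarrow> (\<exists>e1 e2. split2 e e1 e2 \<and> semM xs x A e1 \<and> semM xs x B e2)"
proof -
  obtain la lb where la: "mset la = A" and lb: "mset lb = B" using ex_mset by metis
  have "semM xs x (A + B) e = semL (map (sform xs x) (la @ lb)) e"
    using semM_iff[of "la @ lb" "A + B" xs x e] la lb by simp
  also have "\<dots> = (\<exists>e1 e2. split2 e e1 e2 \<and> semL (map (sform xs x) la) e1 \<and> semL (map (sform xs x) lb) e2)"
    using semL_app by simp
  also have "\<dots> = (\<exists>e1 e2. split2 e e1 e2 \<and> semM xs x A e1 \<and> semM xs x B e2)"
    unfolding semM_iff[OF la] semM_iff[OF lb] ..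
  finally show ?thesis .
qed

lemma semM_single: "semM xs x {#c#} e \<longleftrightarrow> sat (sform xs x c) e"
proof -
  have "semM xs x {#c#} e = semL [sform xs x c] e" using semM_iff[of "[c]" "{#c#}" xs x e] by simp
  also have "\<dots> = sat (sform xs x c) e"
    using semL_star_list[of "[sform xs x c]" e] by simp
  finally show ?thesis .
qed

lemma semM_pair: "semM xs x {#a, b#} e \<longleftrightarrow> (\<exists>e1 e2. split2 e e1 e2 \<and> sat (sform xs x a) e1 \<and> sat (sform xs x b) e2)"
  using semM_plus[of xs x "{#a#}" "{#b#}" e] by (simp add: semM_single add_mset_commute)

lemma semM_frame:
  fixes e :: "('d,'u,'b) env"
  assumes "\<And>e::('d,'u,'b) env. semM xs x A e \<Longrightarrow> semM xs x B e" "semM xs x (N + A) e"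
  shows "semM xs x (N + B) e"
  using assms unfolding semM_plus by blast

lemma semM_frame':
  fixes e :: "('d,'u,'b) env"
  assumes "\<And>e::('d,'u,'b) env. semM xs x A e \<Longrightarrow> semM xs x B e" "M = N + A" "M2 = N + B" "semM xs x M e"
  shows "semM xs x M2 e"
  using semM_frame[of xs x A B N e] assms by simp

lemma frameR:
  fixes e :: "('d,'u,'b) env"
  assumes ent: "\<And>e'::('d,'u,'b) env. semM xs x A e' \<Longrightarrow> semM xs x B e'"
    and s: "semM xs x M e" and "M = N + A" and "M2 = N + B"
  shows "semM xs x M2 e"
  using semM_frame[of xs x A B N e] assms by simp

section \<open>Local entailments\<close>

lemma L1:
  fixes T1 T2 :: "('u::finite,'b::finite) lit set" and e :: "('d,'u,'b) env"
  assumes xnot: "x \<notin> set xs" and T1: "T1 \<in> ext xs x" and T2: "T2 \<in> ext xs x"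
    and dj: "posset T1 \<inter> posset T2 = {}"
    and s: "semM xs x {#SOne {1,2} (oplus xs x T1 T2)#} e"
  shows "semM xs x {#SOne {1} T1, SOne {2} T2#} e"
  using split_One12[OF xnot T1 T2 dj] s unfolding semM_pair semM_single by simp

lemma L4:
  fixes T1 T2 :: "('u::finite,'b::finite) lit set" and e :: "('d,'u,'b) env"
  assumes xnot: "x \<notin> set xs" and T1: "T1 \<in> ext xs x" and T2: "T2 \<in> ext xs x"
    and dj: "posset T1 \<inter> posset T2 = {}"
    and s: "semM xs x {#SAny {1,2} (oplus xs x T1 T2)#} e"
  shows "semM xs x {#SAny {1} T1, SAny {2} T2#} e"
  using split_Any12[OF xnot T1 T2 dj] s unfolding semM_pair semM_single by force

lemma L_OneAny:
  fixes T :: "('u::finite,'b::finite) lit set" and e :: "('d,'u,'b) env"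
  assumes xnot: "x \<notin> set xs" and T: "T \<in> ext xs x"
    and s: "semM xs x {#SOne m T, SAny m T#} e"
  shows "semM xs x {#SAny m T#} e"
proof -
  obtain e1 e2 where o: "split2 e e1 e2" "sat (OneF xs x m T) e1" "sat (AnyF xs x m T) e2"
    using s unfolding semM_pair by auto
  show ?thesis unfolding semM_single using Any_merge[OF xnot T o(1) One_Any[OF xnot T o(2)] o(3)] by simp
qed

lemma L_AnyAny:
  fixes T :: "('u::finite,'b::finite) lit set" and e :: "('d,'u,'b) env"
  assumes xnot: "x \<notin> set xs" and T: "T \<in> ext xs x"
    and s: "semM xs x {#SAny m T, SAny m T#} e"
  shows "semM xs x {#SAny m T#} e"
  using s Any_merge[OF xnot T] unfolding semM_pair semM_single by auto

lemma L_AnyDup: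
  fixes T :: "('u::finite,'b::finite) lit set" and e :: "('d,'u,'b) env"
  assumes xnot: "x \<notin> set xs" and T: "T \<in> ext xs x"
    and s: "semM xs x {#SAny m T#} e"
  shows "semM xs x {#SAny m T, SAny m T#} e"
proof -
  have a: "sat (AnyF xs x m T) e" using s unfolding semM_single by simp
  have "inj_on (easg e) (set xs)" using sat_dist[OF xnot, of "SAny m T"] a T by simp
  then have "sat (AnyF xs x m T) (emptyof e)" using GE_emptyof[OF xnot] GE_Any[OF xnot T] by blast
  then show ?thesis unfolding semM_pair using a split_emptyof(1)[of e] by auto
qed

lemma L_GEunit:
  fixes c :: "('u::finite,'b::finite) sconj" and e :: "('d,'u,'b) env"
  assumes xnot: "x \<notin> set xs" and ok: "okc xs x c"
    and s: "semM xs x {#c, SGE#} e"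
  shows "semM xs x {#c#} e"
  using s GE_unit[OF xnot ok] unfolding semM_pair semM_single by auto

lemma L_GEintro:
  fixes c :: "('u::finite,'b::finite) sconj" and e :: "('d,'u,'b) env"
  assumes xnot: "x \<notin> set xs" and ok: "okc xs x c"
    and s: "semM xs x {#c#} e"
  shows "semM xs x {#c, SGE#} e"
proof -
  have a: "sat (sform xs x c) e" using s unfolding semM_single by simp
  have "inj_on (easg e) (set xs)" using sat_dist[OF xnot ok a] .
  then have "sat (GE xs x) (emptyof e)" using GE_emptyof[OF xnot] by blast
  then show ?thesis unfolding semM_pair using a split_emptyof(1)[of e] by auto
qed

lemma L_GE_Any:
  fixes T :: "('u::finite,'b::finite) lit set" and e :: "('d,'u,'b) env"
  assumes xnot: "x \<notin> set xs" and T: "T \<in> ext xs x"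
    and s: "semM xs x {#SGE#} e"
  shows "semM xs x {#SAny m T#} e"
  using s GE_Any[OF xnot T] unfolding semM_single by simp




definition invM :: "nat list \<Rightarrow> nat \<Rightarrow> ('u,'b) sconj multiset \<Rightarrow> bool" where
  "invM xs x M \<longleftrightarrow> (\<forall>c\<in>#M. okc xs x c)"

lemma invM_plus[simp]: "invM xs x (A + B) = (invM xs x A \<and> invM xs x B)"
  "invM xs x (add_mset c A) = (okc xs x c \<and> invM xs x A)" "invM xs x {#} = True"
  unfolding invM_def by auto

lemma eqstep_inv: "eqstep M M' \<Longrightarrow> invM xs x M \<Longrightarrow> invM xs x M'"
  unfolding eqstep_def by auto

lemma rule14_inv: "rule14 xs x M M' \<Longrightarrow> invM xs x M \<Longrightarrow> invM xs x M'"
  unfolding rule14_def using oplus_ok by fastforce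

lemma rule56_inv: "rule56 M M' \<Longrightarrow> invM xs x M \<Longrightarrow> invM xs x M'"
  unfolding rule56_def by auto

lemma ex_elem: "M \<noteq> {#} \<Longrightarrow> \<exists>c N. M = add_mset c N"
  by (metis multiset_cases)

lemma eqstep_sem:
  fixes e :: "('d,'u::finite,'b::finite) env"
  assumes xnot: "x \<notin> set xs" and inv: "invM xs x M" and st: "eqstep M M'"
    and s: "semM xs x M' e"
  shows "semM xs x M e"
  using st unfolding eqstep_def
proof (elim disjE conjE exE)
  assume "M \<noteq> {#}" "M' = add_mset SGE M"
  then obtain c N where M: "M = add_mset c N" using ex_elem by blast
  have ok: "okc xs x c" using inv M by simp
  show ?thesis
    by (rule frameR[where N=N, OF L_GEunit[OF xnot ok] s]) (use M \<open>M' = add_mset SGE M\<close> in auto)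
next
  assume "M' \<noteq> {#}" "M = add_mset SGE M'"
  then obtain c N where M': "M' = add_mset c N" using ex_elem by blast
  have ok: "okc xs x c" using inv M' \<open>M = add_mset SGE M'\<close> by simp
  show ?thesis
    by (rule frameR[where N=N, OF L_GEintro[OF xnot ok] s]) (use M' \<open>M = add_mset SGE M'\<close> in auto)
next
  fix N m T assume h: "M = N + {#SAny m T, SAny m T#}" "M' = N + {#SAny m T#}"
  have T: "T \<in> ext xs x" using inv h by simp
  show ?thesis by (rule frameR[where N=N, OF L_AnyDup[OF xnot T] s]) (use h in auto)
next
  fix N m T assume h: "M' = N + {#SAny m T, SAny m T#}" "M = N + {#SAny m T#}"
  have T: "T \<in> ext xs x" using inv h by simp
  show ?thesis by (rule frameR[where N=N, OF L_AnyAny[OF xnot T] s]) (use h in auto)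
qed

lemma rule14_sem:
  fixes e :: "('d,'u::finite,'b::finite) env"
  assumes xnot: "x \<notin> set xs" and inv: "invM xs x M" and st: "rule14 xs x M M'"
    and s: "semM xs x M' e"
  shows "semM xs x M e"
proof -
  obtain N T1 T2 where dj: "posset T1 \<inter> posset T2 = {}" and
    cs: "(M = N + {#SOne {1} T1, SOne {2} T2#} \<and> M' = N + {#SOne {1,2} (oplus xs x T1 T2)#}) \<or>
      (M = N + {#SOne {1} T1, SAny {2} T2#} \<and>
         M' = N + {#SOne {1,2} (oplus xs x T1 T2), SAny {2} T2#}) \<or>
      (M = N + {#SAny {1} T1, SOne {2} T2#} \<and>
         M' = N + {#SAny {1} T1, SOne {1,2} (oplus xs x T1 T2)#}) \<or>
      (M = N + {#SAny {1} T1, SAny {2} T2#} \<and>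
         M' = N + {#SAny {1} T1, SAny {2} T2, SAny {1,2} (oplus xs x T1 T2)#})"
    using st unfolding rule14_def by blast
  have T: "T1 \<in> ext xs x" "T2 \<in> ext xs x" using cs inv by auto
  note l1 = L1[OF xnot T(1) T(2) dj]
  note l4 = L4[OF xnot T(1) T(2) dj]
  let ?T = "oplus xs x T1 T2"
  from cs show ?thesis
  proof (elim disjE conjE)
    assume h: "M = N + {#SOne {1} T1, SOne {2} T2#}" "M' = N + {#SOne {1,2} ?T#}"
    show ?thesis by (rule frameR[where N=N, OF l1 s]) (use h in auto)
  next
    assume h: "M = N + {#SOne {1} T1, SAny {2} T2#}" "M' = N + {#SOne {1,2} ?T, SAny {2} T2#}"
    have s1: "semM xs x ((N + {#SAny {2} T2#}) + {#SOne {1} T1, SOne {2} T2#}) e"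
      by (rule frameR[where N="N + {#SAny {2} T2#}", OF l1 s]) (use h in auto)
    show ?thesis
      by (rule frameR[where N="N + {#SOne {1} T1#}", OF L_OneAny[OF xnot T(2)] s1]) (use h in \<open>auto simp: add_mset_commute\<close>)
  next
    assume h: "M = N + {#SAny {1} T1, SOne {2} T2#}" "M' = N + {#SAny {1} T1, SOne {1,2} ?T#}"
    have s1: "semM xs x ((N + {#SAny {1} T1#}) + {#SOne {1} T1, SOne {2} T2#}) e"
      by (rule frameR[where N="N + {#SAny {1} T1#}", OF l1 s]) (use h in auto)
    show ?thesis
      by (rule frameR[where N="N + {#SOne {2} T2#}", OF L_OneAny[OF xnot T(1)] s1]) (use h in \<open>auto simp: add_mset_commute\<close>)
  next
    assume h: "M = N + {#SAny {1} T1, SAny {2} T2#}"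
      "M' = N + {#SAny {1} T1, SAny {2} T2, SAny {1,2} ?T#}"
    have s1: "semM xs x ((N + {#SAny {1} T1, SAny {2} T2#}) + {#SAny {1} T1, SAny {2} T2#}) e"
      by (rule frameR[where N="N + {#SAny {1} T1, SAny {2} T2#}", OF l4 s]) (use h in auto)
    have s2: "semM xs x ((N + {#SAny {2} T2, SAny {2} T2#}) + {#SAny {1} T1#}) e"
      by (rule frameR[where N="N + {#SAny {2} T2, SAny {2} T2#}", OF L_AnyAny[OF xnot T(1)] s1]) auto
    show ?thesis
      by (rule frameR[where N="N + {#SAny {1} T1#}", OF L_AnyAny[OF xnot T(2)] s2]) (use h in auto)
  qed
qed

lemma rule56_sem:
  fixes e :: "('d,'u::finite,'b::finite) env"
  assumes xnot: "x \<notin> set xs" and inv: "invM xs x M" and st: "rule56 M M'"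
    and s: "semM xs x M' e"
  shows "semM xs x M e"
proof -
  obtain N T where h: "M = N + {#SAny {1} T#} \<or> M = N + {#SAny {2} T#}" "M' = N + {#SGE#}"
    using st unfolding rule56_def by blast
  have T: "T \<in> ext xs x" using h(1) inv by auto
  from h(1) show ?thesis
  proof
    assume "M = N + {#SAny {1} T#}"
    show ?thesis by (rule frameR[where N=N, OF L_GE_Any[OF xnot T] s]) (use h \<open>M = _\<close> in auto)
  next
    assume "M = N + {#SAny {2} T#}"
    show ?thesis by (rule frameR[where N=N, OF L_GE_Any[OF xnot T] s]) (use h \<open>M = _\<close> in auto)
  qed
qed

lemma phase1_reach:
  assumes xnot: "x \<notin> set xs" and r: "(phase1 xs x)\<^sup>*\<^sup>* M M'" and inv: "invM xs x M"
  shows "invM xs x M' \<and> (\<forall>e::('d,'u::finite,'b::finite) env. semM xs x M' e \<longrightarrow> semM xs x M e)"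
  using r
proof (induction rule: rtranclp_induct)
  case base then show ?case using inv by simp
next
  case (step y z)
  have iy: "invM xs x y" using step.IH by simp
  have "invM xs x z" using step.hyps(2) iy eqstep_inv rule14_inv unfolding phase1_def by blast
  moreover have "semM xs x y e" if "semM xs x z e" for e :: "('d,'u,'b) env"
    using step.hyps(2) eqstep_sem[OF xnot iy _ that] rule14_sem[OF xnot iy _ that] unfolding phase1_def by blast
  ultimately show ?case using step.IH by blast
qed

lemma phase2_reach:
  assumes xnot: "x \<notin> set xs" and r: "phase2\<^sup>*\<^sup>* M M'" and inv: "invM xs x M"
  shows "invM xs x M' \<and> (\<forall>e::('d,'u::finite,'b::finite) env. semM xs x M' e \<longrightarrow> semM xs x M e)"
  using r
proof (induction rule: rtranclp_induct)
  case base then show ?case using inv by simp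
next
  case (step y z)
  have iy: "invM xs x y" using step.IH by simp
  have "invM xs x z" using step.hyps(2) iy eqstep_inv rule56_inv unfolding phase2_def by blast
  moreover have "semM xs x y e" if "semM xs x z e" for e :: "('d,'u,'b) env"
    using step.hyps(2) eqstep_sem[OF xnot iy _ that] rule56_sem[OF xnot iy _ that] unfolding phase2_def by blast
  ultimately show ?case using step.IH by blast
qed




lemma Xeq_sound:
  fixes e :: "('d,'u,'b) env"
  shows "semM xs x (replicate_mset i (SOne m T) + {#SGE#}) e \<Longrightarrow> sat (Xeq xs x m T i) e"
proof (induction i arbitrary: e)
  case 0
  then show ?case using semM_single[of xs x SGE e] by simp
next
  case (Suc i)
  have "semM xs x ({#SOne m T#} + (replicate_mset i (SOne m T) + {#SGE#})) e"
    using Suc.prems by simp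
  then obtain e1 e2 where o: "split2 e e1 e2" "semM xs x {#SOne m T#} e1"
    "semM xs x (replicate_mset i (SOne m T) + {#SGE#}) e2"
    unfolding semM_plus by blast
  have "sat (OneF xs x m T) e1" using o(2) unfolding semM_single by simp
  moreover have "sat (Xeq xs x m T i) e2" using Suc.IH[OF o(3)] .
  ultimately show ?case using o(1) by auto
qed

lemma xconj_sound:
  fixes e :: "('d,'u,'b) env"
  shows "semM xs x (xconj m (T, s)) e \<Longrightarrow> sat (Xf xs x m T s) e"
proof (cases s)
  case (Exactly i)
  then show "semM xs x (xconj m (T, s)) e \<Longrightarrow> sat (Xf xs x m T s) e" using Xeq_sound by simp
next
  case (AtLeast p)
  assume "semM xs x (xconj m (T, s)) e"
  then have "semM xs x ((replicate_mset p (SOne m T) + {#SGE#}) + {#SAny m T#}) e"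
    using AtLeast by simp
  then obtain e1 e2 where o: "split2 e e1 e2" "semM xs x (replicate_mset p (SOne m T) + {#SGE#}) e1"
    "semM xs x {#SAny m T#} e2"
    unfolding semM_plus by blast
  have "sat (Xeq xs x m T p) e1" using Xeq_sound[OF o(2)] .
  moreover have "sat (AnyF xs x m T) e2" using o(3) unfolding semM_single by simp
  ultimately show ?thesis using o(1) AtLeast by auto
qed

lemma fold_sound:
  fixes e :: "('d,'u,'b) env"
  shows "semM xs x ({#SK F#} + sum_list (map (xconj m) ps)) e \<Longrightarrow>
    sat (foldl Star (KF xs x F) (map (\<lambda>(T,s). Xf xs x m T s) ps)) e"
proof (induction ps arbitrary: e rule: rev_induct)
  case Nil
  then show ?case using semM_single[of xs x "SK F" e] by simp
next
  case (snoc p ps)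
  obtain T s where p: "p = (T, s)" by (cases p)
  have "semM xs x (({#SK F#} + sum_list (map (xconj m) ps)) + xconj m p) e"
    using snoc.prems by (simp add: ac_simps)
  then obtain e1 e2 where o: "split2 e e1 e2" "semM xs x ({#SK F#} + sum_list (map (xconj m) ps)) e1"
    "semM xs x (xconj m p) e2"
    unfolding semM_plus by blast
  have "sat (foldl Star (KF xs x F) (map (\<lambda>(T,s). Xf xs x m T s) ps)) e1" using snoc.IH[OF o(2)] .
  moreover have "sat (Xf xs x m T s) e2" using xconj_sound o(3) p by simp
  ultimately show ?case using o(1) p by auto
qed

lemma sat_eq_form: "sat (eq_form E) e = (\<forall>(y,z)\<in>set E. easg e y = easg e z)"
  unfolding eq_form_def sat_conj_list by auto

lemma okc_xconj: "T \<in> ext xs x \<Longrightarrow> invM xs x (xconj m (T, s))"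
  by (cases s) (auto simp: invM_def)

lemma inv_parts:
  assumes "\<forall>p\<in>set ps. fst p \<in> ext xs x"
  shows "invM xs x (sum_list (map (xconj m) ps))"
  using assms
proof (induction ps)
  case Nil then show ?case by simp
next
  case (Cons p ps)
  then show ?case using okc_xconj[of "fst p" xs x m "snd p"] by (cases p) simp
qed

lemma L_K:
  fixes F1 F2 :: "('u::finite,'b::finite) lit set" and e :: "('d,'u,'b) env"
  assumes xnot: "x \<notin> set xs" and F1: "is_gccat xs F1" and F2: "is_gccat xs F2"
    and dj: "posset F1 \<inter> posset F2 = {}"
    and s: "semM xs x {#SK (otimes xs F1 F2)#} e"
  shows "semM xs x {#SK F1, SK F2#} e"
  using split_KF[OF xnot F1 F2 dj] s unfolding semM_pair semM_single by simp

theorem lemma16: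
  fixes xs :: "nat list" and x :: nat
    and C1 C2 :: "('u::finite, 'b::finite) cstar"
    and H :: "('u, 'b) form"
    and e :: "('d, 'u, 'b) env"
  assumes "distinct xs" and "x \<notin> set xs"
    and "is_cstar xs x C1" and "is_cstar xs x C2" and "compatible C1 C2"
    and "derivation_result xs x C1 C2 H"
    and "wf_env e"
  shows "sat (Imp (Conj (eq_form (ceq C1)) H) (Star (Sf xs x {1} C1) (Sf xs x {2} C2))) e"
proof -
  note xnot = assms(2)
  have F1: "is_gccat xs (cF C1)" and F2: "is_gccat xs (cF C2)"
    using assms(3,4) unfolding is_cstar_def by auto
  have P1: "\<forall>p\<in>set (cparts C1). fst p \<in> ext xs x" and P2: "\<forall>p\<in>set (cparts C2). fst p \<in> ext xs x"
    using assms(3,4) unfolding is_cstar_def by auto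
  obtain M1 M2 l where r1: "(phase1 xs x)\<^sup>*\<^sup>* (init_state xs C1 C2) M1" and r2: "phase2\<^sup>*\<^sup>* M1 M2"
    and fin: "final_state M2" and ml: "mset l = M2" and Hl: "H = star_list (map (sform xs x) l)"
    using assms(6) unfolding derivation_result_def by blast
  define X1 where "X1 = sum_list (map (xconj {1}) (cparts C1))"
  define X2 where "X2 = sum_list (map (xconj {2}) (cparts C2))"
  define K where "K = (if posset (cF C1) \<inter> posset (cF C2) = {} then SK (otimes xs (cF C1) (cF C2)) else SFalse)"
  have init: "init_state xs C1 C2 = {#K#} + X1 + X2"
    unfolding init_state_def X1_def X2_def K_def by simp
  have invK: "okc xs x K" unfolding K_def using otimes_ok[OF F1 F2] by auto
  have inv0: "invM xs x (init_state xs C1 C2)"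
    unfolding init using invK inv_parts[OF P1] inv_parts[OF P2] unfolding X1_def X2_def by simp
  have R1: "invM xs x M1 \<and> (\<forall>e::('d,'u,'b) env. semM xs x M1 e \<longrightarrow> semM xs x (init_state xs C1 C2) e)"
    using phase1_reach[OF xnot r1 inv0] .
  have R2: "\<forall>e::('d,'u,'b) env. semM xs x M2 e \<longrightarrow> semM xs x M1 e"
    using phase2_reach[OF xnot r2] R1 by blast
  show ?thesis
  proof (simp only: sat.simps, intro impI, elim conjE)
    assume eq: "sat (eq_form (ceq C1)) e" and h: "sat H e"
    have "l \<noteq> []" using fin ml unfolding final_state_def by auto
    then have "map (sform xs x) l \<noteq> []" by simp
    then have "semL (map (sform xs x) l) e" using h Hl semL_star_list[of "map (sform xs x) l" e] by simp
    then have "semM xs x M2 e" unfolding semM_iff[OF ml] .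
    then have si: "semM xs x ({#K#} + X1 + X2) e" using R1 R2 init by auto
    have dj: "posset (cF C1) \<inter> posset (cF C2) = {}"
    proof (rule ccontr)
      assume "\<not> ?thesis"
      then have "K = SFalse" unfolding K_def by simp
      then show False using si unfolding semM_plus semM_single by (auto simp: add.assoc)
    qed
    then have Kd: "K = SK (otimes xs (cF C1) (cF C2))" unfolding K_def by simp
    have "semM xs x ((X1 + X2) + {#SK (cF C1), SK (cF C2)#}) e"
      by (rule frameR[where N="X1 + X2", OF L_K[OF xnot F1 F2 dj] si]) (use Kd in \<open>simp_all add: ac_simps\<close>)
    moreover have "(X1 + X2) + {#SK (cF C1), SK (cF C2)#} = ({#SK (cF C1)#} + X1) + ({#SK (cF C2)#} + X2)"
      by (simp add: ac_simps)
    ultimately have s3: "semM xs x (({#SK (cF C1)#} + X1) + ({#SK (cF C2)#} + X2)) e" by metis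
    obtain e1 e2 where sp: "split2 e e1 e2" and s1: "semM xs x ({#SK (cF C1)#} + X1) e1"
      and s2: "semM xs x ({#SK (cF C2)#} + X2) e2"
      using s3 semM_plus[of xs x "{#SK (cF C1)#} + X1" "{#SK (cF C2)#} + X2" e] by blast
    have a1: "easg e1 = easg e" "easg e2 = easg e"
      using split_basic[OF sp] split_basic[OF split_comm[OF sp]] by auto
    have "sat (Sf xs x {1} C1) e1"
      unfolding Sf_def using fold_sound[OF s1[unfolded X1_def]] eq a1 by (simp add: sat_eq_form)
    moreover have "sat (Sf xs x {2} C2) e2"
      unfolding Sf_def using fold_sound[OF s2[unfolded X2_def]] eq a1 assms(5)
      by (simp add: sat_eq_form compatible_def)
    ultimately show "\<exists>e1 e2. split2 e e1 e2 \<and> sat (Sf xs x {1} C1) e1 \<and> sat (Sf xs x {2} C2) e2"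
      using sp by auto
  qed
qed


end
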